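(* Let $L\subset\mathbb{R}^{12}$ be a $12$-dimensional lattice and $P_0$ a Delaunay polytope of $L$ with $14$ vertices, whose vertex set $V$ is the disjoint union of four sets $V(\Sigma_1^2),V(\Sigma_2^2)$ (each of size $3$) and $V(\Sigma_1^3),V(\Sigma_2^3)$ (each of size $4$), such that the squared Euclidean distances $d(u,v)=\|u-v\|^2$ between distinct vertices are: $d(u,v)=7$ if $u,v$ lie in the same set $V(\Sigma_i^q)$; $d(u,v)=6$ if $u\in V(\Sigma_i^2)$, $v\in V(\Sigma_i^3)$, $i=1,2$; $d(u,v)=10$ if $u\in V(\Sigma_1^2)$, $v\in V(\Sigma_2^2)$; $d(u,v)=12$ if $u\in V(\Sigma_1^3), v\in V(\Sigma_2^3)$, or $u\in V(\Sigma_1^2), v\in V(\Sigma_2^3)$, or $u\in V(\Sigma_2^2), v\in V(\Sigma_1^3)$. Then: (i) for every $u\in V$, the set $V\setminus\{u\}$ is an $\mathbb{R}$-affine basis of $P_0$; (ii) the $\mathbb{Z}$-module of integral affine dependencies $Y(P_0)=\{y\in\mathbb{Z}^V:\sum_v y(v)v=0,\ \sum_v y(v)=0\}$ is $y\mathbb{Z}$, where $y(v)=3$ on $V(\Sigma_1^2)$, $-3$ on $V(\Sigma_2^2)$, $2$ on $V(\Sigma_2^3)$, $-2$ on $V(\Sigma_1^3)$; (iii) $P_0$ is not $\mathbb{Z}$-basic; (iv) the rank of $P_0$ is $77$.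
   Context: A Delaunay polytope of a lattice $L\subset\mathbb{R}^n$ is a polytope whose vertex set is $L\cap S$, where $S=S(c,r)$ is an empty sphere: $\|a-c\|^2\ge r^2$ for all $a\in L$, and $S\cap L$ contains $n+1$ affinely independent points. For a ring $\mathbb{K}$, a subset $W\subseteq V(P)$ is $\mathbb{K}$-generating if every vertex $w\in V(P)$ can be written $w=\sum_{v\in W}z(v)v$ with $z(v)\in\mathbb{K}$ and $\sum_{v\in W}z(v)=1$; a $\mathbb{K}$-generating set of size $n+1$ is a $\mathbb{K}$-affine basis, and $P$ is $\mathbb{K}$-basic if it has a $\mathbb{K}$-affine basis. For a finite set $V$, the hypermetric cone $HYP(V)$ is the set of functions $d:V\times V\to\mathbb{R}$ with $d(u,v)=d(v,u)$, $d(v,v)=0$, and $\sum_{u,v\in V}b_ub_v d(u,v)\le 0$ for all $b\in\mathbb{Z}^V$ with $\sum_v b_v=1$. The rank of a Delaunay polytope $P$ is the dimension of the minimal face of $HYP(V(P))$ containing $d_P(u,v)=\|u-v\|^2$. *)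

theory Defs
  imports "HOL-Analysis.Analysis"
begin

definition is_lattice :: "'a::euclidean_space set \<Rightarrow> bool" where
  "is_lattice L \<longleftrightarrow> (\<exists>B. independent B \<and> card B = DIM('a) \<and>
      L = {(\<Sum>b\<in>B. of_int (z b) *\<^sub>R b) | z. True})"

definition delaunay_polytope :: "'a::euclidean_space set \<Rightarrow> 'a set \<Rightarrow> bool" where
  "delaunay_polytope L P \<longleftrightarrow> (\<exists>c r.
      (\<forall>a\<in>L. (norm (a - c))\<^sup>2 \<ge> r\<^sup>2) \<and>
      (\<exists>W. W \<subseteq> L \<inter> sphere c r \<and> \<not> affine_dependent W \<and> card W = DIM('a) + 1) \<and>
      P = convex hull (L \<inter> sphere c r))"

definition vertices :: "'a::real_vector set \<Rightarrow> 'a set" where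
  "vertices P = {v. v extreme_point_of P}"

definition K_generating :: "real set \<Rightarrow> 'a::real_vector set \<Rightarrow> 'a set \<Rightarrow> bool" where
  "K_generating K V W \<longleftrightarrow> W \<subseteq> V \<and> (\<forall>w\<in>V. \<exists>z. (\<forall>v\<in>W. z v \<in> K) \<and>
      w = (\<Sum>v\<in>W. z v *\<^sub>R v) \<and> (\<Sum>v\<in>W. z v) = 1)"

definition K_affine_basis :: "real set \<Rightarrow> 'a::euclidean_space set \<Rightarrow> 'a set \<Rightarrow> bool" where
  "K_affine_basis K V W \<longleftrightarrow> K_generating K V W \<and> card W = DIM('a) + 1"

definition K_basic :: "real set \<Rightarrow> 'a::euclidean_space set \<Rightarrow> bool" where
  "K_basic K V \<longleftrightarrow> (\<exists>W. K_affine_basis K V W)"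

definition int_affine_deps :: "'a::real_vector set \<Rightarrow> ('a \<Rightarrow> int) set" where
  "int_affine_deps V = {y. (\<forall>v. v \<notin> V \<longrightarrow> y v = 0) \<and>
      (\<Sum>v\<in>V. of_int (y v) *\<^sub>R v) = 0 \<and> (\<Sum>v\<in>V. y v) = 0}"

(* Hypermetric cone HYP(V), elements of R^(V\<times>V) represented as functions on pairs
   vanishing outside V\<times>V *)
definition HYP :: "'a set \<Rightarrow> ('a \<times> 'a \<Rightarrow> real) set" where
  "HYP V = {d. (\<forall>u v. (u \<notin> V \<or> v \<notin> V) \<longrightarrow> d (u, v) = 0) \<and>
      (\<forall>u v. d (u, v) = d (v, u)) \<and> (\<forall>v. d (v, v) = 0) \<and>
      (\<forall>b::'a \<Rightarrow> int. (\<forall>v. v \<notin> V \<longrightarrow> b v = 0) \<longrightarrow> (\<Sum>v\<in>V. b v) = 1 \<longrightarrow>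
          (\<Sum>u\<in>V. \<Sum>v\<in>V. of_int (b u * b v) * d (u, v)) \<le> 0)}"

(* faces of a convex set of real-valued functions (pointwise vector structure);
   this is face_of spelled out for function spaces *)
definition fun_face_of :: "('x \<Rightarrow> real) set \<Rightarrow> ('x \<Rightarrow> real) set \<Rightarrow> bool" where
  "fun_face_of F S \<longleftrightarrow> F \<subseteq> S \<and>
      (\<forall>a\<in>F. \<forall>b\<in>F. \<forall>t::real. 0 \<le> t \<and> t \<le> 1 \<longrightarrow> (\<lambda>x. (1 - t) * a x + t * b x) \<in> F) \<and>
      (\<forall>a\<in>S. \<forall>b\<in>S. \<forall>t::real. 0 < t \<and> t < 1 \<longrightarrow> (\<lambda>x. (1 - t) * a x + t * b x) \<in> F
           \<longrightarrow> a \<in> F \<and> b \<in> F)"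

definition min_face :: "('x \<Rightarrow> real) set \<Rightarrow> ('x \<Rightarrow> real) \<Rightarrow> ('x \<Rightarrow> real) set" where
  "min_face S d = \<Inter>{F. fun_face_of F S \<and> d \<in> F}"

definition fun_lin_indep :: "('x \<Rightarrow> real) set \<Rightarrow> bool" where
  "fun_lin_indep D \<longleftrightarrow> finite D \<and>
      (\<forall>c. (\<forall>x. (\<Sum>g\<in>D. c g * g x) = 0) \<longrightarrow> (\<forall>g\<in>D. c g = 0))"

definition fun_dim :: "('x \<Rightarrow> real) set \<Rightarrow> nat" where
  "fun_dim F = Max {card D | D. \<exists>f0\<in>F. D \<subseteq> (\<lambda>f x. f x - f0 x) ` F \<and> fun_lin_indep D}"

definition dist_fun :: "'a::real_normed_vector set \<Rightarrow> ('a \<times> 'a \<Rightarrow> real)" where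
  "dist_fun V = (\<lambda>(u, v). if u \<in> V \<and> v \<in> V then (norm (u - v))\<^sup>2 else 0)"

definition delaunay_rank :: "'a::real_normed_vector set \<Rightarrow> nat" where
  "delaunay_rank V = fun_dim (min_face (HYP V) (dist_fun V))"

end

theory Submission
  imports Defs "HOL-Library.Function_Algebras"
begin


lemma norm_diff_sq_c:
  fixes u v c :: "'a::real_inner"
  shows "(norm (u - v))\<^sup>2 = (norm (u - c))\<^sup>2 + (norm (v - c))\<^sup>2 - 2 * ((u - c) \<bullet> (v - c))"
proof -
  have "u - v = (u - c) - (v - c)" by simp
  then show ?thesis
    by (simp only: power2_norm_eq_inner inner_diff_left inner_diff_right inner_commute) (simp add: inner_commute algebra_simps)
qed

lemma quad_identity:
  fixes V :: "'a::real_inner set" and b :: "'a \<Rightarrow> real"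
  assumes "finite V"
  shows "(\<Sum>u\<in>V. \<Sum>v\<in>V. b u * b v * (norm (u - v))\<^sup>2)
       = 2 * (\<Sum>v\<in>V. b v) * (\<Sum>v\<in>V. b v * (norm (v - c))\<^sup>2)
         - 2 * (norm (\<Sum>v\<in>V. b v *\<^sub>R (v - c)))\<^sup>2"
proof -
  have e1: "(norm (\<Sum>v\<in>V. b v *\<^sub>R (v - c)))\<^sup>2 = (\<Sum>u\<in>V. \<Sum>v\<in>V. b u * b v * ((u - c) \<bullet> (v - c)))"
    by (simp add: power2_norm_eq_inner inner_sum_left inner_sum_right sum_distrib_left mult.assoc inner_commute mult.left_commute)
  have "(\<Sum>u\<in>V. \<Sum>v\<in>V. b u * b v * (norm (u - v))\<^sup>2)
     = (\<Sum>u\<in>V. \<Sum>v\<in>V. b u * b v * (norm (u - c))\<^sup>2 + b u * b v * (norm (v - c))\<^sup>2 - 2 * (b u * b v * ((u - c) \<bullet> (v - c))))"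
    proof (intro sum.cong refl)
    fix u v
    have h: "(norm (u - v))\<^sup>2 = (norm (u - c))\<^sup>2 + (norm (v - c))\<^sup>2 - 2 * ((u - c) \<bullet> (v - c))"
      by (rule norm_diff_sq_c)
    show "b u * b v * (norm (u - v))\<^sup>2 = b u * b v * (norm (u - c))\<^sup>2 + b u * b v * (norm (v - c))\<^sup>2 - 2 * (b u * b v * ((u - c) \<bullet> (v - c)))"
      unfolding h by (simp only: algebra_simps)
  qed
  also have "\<dots> = (\<Sum>u\<in>V. \<Sum>v\<in>V. b u * b v * (norm (u - c))\<^sup>2) + (\<Sum>u\<in>V. \<Sum>v\<in>V. b u * b v * (norm (v - c))\<^sup>2)
       - 2 * (\<Sum>u\<in>V. \<Sum>v\<in>V. b u * b v * ((u - c) \<bullet> (v - c)))"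
    by (simp add: sum.distrib sum_subtractf sum_distrib_left)
  also have "(\<Sum>u\<in>V. \<Sum>v\<in>V. b u * b v * (norm (u - c))\<^sup>2) = (\<Sum>v\<in>V. b v) * (\<Sum>v\<in>V. b v * (norm (v - c))\<^sup>2)"
    by (simp add: sum_distrib_left sum_distrib_right algebra_simps)
  also have "(\<Sum>u\<in>V. \<Sum>v\<in>V. b u * b v * (norm (v - c))\<^sup>2) = (\<Sum>v\<in>V. b v) * (\<Sum>v\<in>V. b v * (norm (v - c))\<^sup>2)"
    unfolding sum_product by (simp add: mult_ac)
  finally show ?thesis using e1 by simp
qed

lemma sum_smul_minus_c:
  fixes V :: "'a::real_vector set"
  shows "(\<Sum>v\<in>V. b v *\<^sub>R (v - c)) = (\<Sum>v\<in>V. b v *\<^sub>R v) - (\<Sum>v\<in>V. b v) *\<^sub>R c"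
  by (simp add: scaleR_diff_right sum_subtractf scaleR_sum_left)

lemma sum_const_on:
  assumes "\<And>v. v \<in> S \<Longrightarrow> f v = (m::real)"
  shows "sum f S = real (card S) * m"
  using assms by simp

lemma sum_same_on:
  assumes "finite S" "u \<in> S" "\<And>v. v \<in> S \<Longrightarrow> v \<noteq> u \<Longrightarrow> f v = (m::real)" "f u = 0"
  shows "sum f S = (real (card S) - 1) * m"
proof -
  have "sum f S = f u + sum f (S - {u})" using assms by (simp add: sum.remove)
  also have "sum f (S - {u}) = real (card (S - {u})) * m" using assms by (intro sum_const_on) auto
  moreover have "card S \<ge> 1" using assms card_gt_0_iff[of S] by auto
  ultimately show ?thesis using assms by (simp add: card_Diff_singleton of_nat_diff)
qed

lemma sq3: "(a + b + c)\<^sup>2 \<le> 3 * (a\<^sup>2 + b\<^sup>2 + (c::real)\<^sup>2)"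
proof -
  have "0 \<le> (a - b)\<^sup>2 + (b - c)\<^sup>2 + (a - c)\<^sup>2" by simp
  then show ?thesis by (simp add: power2_eq_square algebra_simps)
qed

lemma sum_fun_apply: "(sum f A) x = (\<Sum>i\<in>A. f i x :: real)"
  by (induction A rule: infinite_finite_induct) (auto simp: plus_fun_def zero_fun_def)

definition ind :: "'a \<Rightarrow> 'a \<Rightarrow> 'a \<times> 'a \<Rightarrow> real" where
  "ind s t x = (if {fst x, snd x} = {s, t} then 1 else 0)"

definition indB :: "'a set \<Rightarrow> 'a \<times> 'a \<Rightarrow> real" where
  "indB B x = (if {fst x, snd x} = B then 1 else 0)"

lemma ind_sym: "ind s t (x, z) = ind s t (z, x)" by (simp add: ind_def insert_commute)
lemma ind_diag: "s \<noteq> t \<Longrightarrow> ind s t (x, x) = 0" by (auto simp: ind_def doubleton_eq_iff)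
lemma ind_split: "s \<noteq> t \<Longrightarrow> ind s t (x, z) = (if x = s \<and> z = t then 1 else 0) + (if x = t \<and> z = s then 1 else 0)"
  by (auto simp: ind_def doubleton_eq_iff)
lemma indB_ind: "indB {u, v} = ind u v" by (simp add: indB_def ind_def fun_eq_iff)

locale conf =
  fixes L V A1 A2 B1 B2 Wd :: "(real^12) set" and c :: "real^12" and r :: real
  assumes Vdef: "V = L \<inter> sphere c r"
    and empty: "\<forall>a\<in>L. r\<^sup>2 \<le> (norm (a - c))\<^sup>2"
    and latsum: "\<And>(b::real^12 \<Rightarrow> int). (\<Sum>v\<in>V. of_int (b v) *\<^sub>R v) \<in> L"
    and Wd: "Wd \<subseteq> V" "\<not> affine_dependent Wd" "card Wd = 13"
    and V14: "card V = 14"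
    and Vpart: "V = A1 \<union> A2 \<union> B1 \<union> B2"
    and disj: "A1 \<inter> A2 = {}" "A1 \<inter> B1 = {}" "A1 \<inter> B2 = {}"
              "A2 \<inter> B1 = {}" "A2 \<inter> B2 = {}" "B1 \<inter> B2 = {}"
    and cards: "card A1 = 3" "card A2 = 3" "card B1 = 4" "card B2 = 4"
    and d_same: "\<And>S u v. S \<in> {A1, A2, B1, B2} \<Longrightarrow> u \<in> S \<Longrightarrow> v \<in> S \<Longrightarrow> u \<noteq> v
                   \<Longrightarrow> (norm (u - v))\<^sup>2 = 7"
    and d_6a: "\<And>u v. u \<in> A1 \<Longrightarrow> v \<in> B1 \<Longrightarrow> (norm (u - v))\<^sup>2 = 6"
    and d_6b: "\<And>u v. u \<in> A2 \<Longrightarrow> v \<in> B2 \<Longrightarrow> (norm (u - v))\<^sup>2 = 6"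
    and d_10: "\<And>u v. u \<in> A1 \<Longrightarrow> v \<in> A2 \<Longrightarrow> (norm (u - v))\<^sup>2 = 10"
    and d_12a: "\<And>u v. u \<in> B1 \<Longrightarrow> v \<in> B2 \<Longrightarrow> (norm (u - v))\<^sup>2 = 12"
    and d_12b: "\<And>u v. u \<in> A1 \<Longrightarrow> v \<in> B2 \<Longrightarrow> (norm (u - v))\<^sup>2 = 12"
    and d_12c: "\<And>u v. u \<in> A2 \<Longrightarrow> v \<in> B1 \<Longrightarrow> (norm (u - v))\<^sup>2 = 12"
begin

definition yi :: "real^12 \<Rightarrow> int" where
  "yi v = (if v \<in> A1 then 3 else if v \<in> A2 then -3 else if v \<in> B2 then 2 else if v \<in> B1 then -2 else 0)"

definition y :: "real^12 \<Rightarrow> real" where "y v = of_int (yi v)"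

lemma finV: "finite V" using V14 by (intro card_ge_0_finite) simp
lemma finA: "finite A1" "finite A2" "finite B1" "finite B2"
  using finV Vpart by (auto intro: finite_subset)

lemma y_A1: "v \<in> A1 \<Longrightarrow> y v = 3" and y_A2: "v \<in> A2 \<Longrightarrow> y v = -3"
  and y_B1: "v \<in> B1 \<Longrightarrow> y v = -2" and y_B2: "v \<in> B2 \<Longrightarrow> y v = 2"
  using disj by (auto simp: y_def yi_def)

lemma yi_out: "v \<notin> V \<Longrightarrow> yi v = 0" using Vpart by (auto simp: yi_def)

lemma y_nz: "v \<in> V \<Longrightarrow> y v \<noteq> 0"
  using Vpart y_A1 y_A2 y_B1 y_B2 by fastforce

lemma sumV: "sum f V = sum f A1 + sum f A2 + sum f B1 + sum f B2"
proof -
  have "sum f V = sum f (A1 \<union> A2 \<union> B1) + sum f B2"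
    unfolding Vpart using finA disj by (intro sum.union_disjoint) auto
  also have "sum f (A1 \<union> A2 \<union> B1) = sum f (A1 \<union> A2) + sum f B1"
    using finA disj by (intro sum.union_disjoint) auto
  also have "sum f (A1 \<union> A2) = sum f A1 + sum f A2"
    using finA disj by (intro sum.union_disjoint) auto
  finally show ?thesis .
qed

lemma nsym: "(norm (u - v))\<^sup>2 = (norm (v - u))\<^sup>2" by (simp add: norm_minus_commute)

lemmas dA1 = d_same[of A1] and dA2 = d_same[of A2] and dB1 = d_same[of B1] and dB2 = d_same[of B2]

lemma dd:
  "u \<in> A1 \<Longrightarrow> v \<in> B1 \<Longrightarrow> (norm (v - u))\<^sup>2 = 6"
  "u \<in> A2 \<Longrightarrow> v \<in> B2 \<Longrightarrow> (norm (v - u))\<^sup>2 = 6"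
  "u \<in> A1 \<Longrightarrow> v \<in> A2 \<Longrightarrow> (norm (v - u))\<^sup>2 = 10"
  "u \<in> B1 \<Longrightarrow> v \<in> B2 \<Longrightarrow> (norm (v - u))\<^sup>2 = 12"
  "u \<in> A1 \<Longrightarrow> v \<in> B2 \<Longrightarrow> (norm (v - u))\<^sup>2 = 12"
  "u \<in> A2 \<Longrightarrow> v \<in> B1 \<Longrightarrow> (norm (v - u))\<^sup>2 = 12"
  using d_6a d_6b d_10 d_12a d_12b d_12c nsym by metis+

lemma row_zero:
  assumes u: "u \<in> V"
  shows "(\<Sum>v\<in>V. y v * (norm (u - v))\<^sup>2) = 0"
proof -
  let ?f = "\<lambda>v. y v * (norm (u - v))\<^sup>2"
  have "u \<in> A1 \<or> u \<in> A2 \<or> u \<in> B1 \<or> u \<in> B2" using u Vpart by auto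
  then show ?thesis
  proof (elim disjE)
    assume uA: "u \<in> A1"
    have "sum ?f A1 = (real (card A1) - 1) * 21" using finA uA
      by (intro sum_same_on) (auto simp: y_A1 dA1)
    moreover have "sum ?f A2 = real (card A2) * (-30)" using uA by (intro sum_const_on) (auto simp: y_A2 d_10)
    moreover have "sum ?f B1 = real (card B1) * (-12)" using uA by (intro sum_const_on) (auto simp: y_B1 d_6a)
    moreover have "sum ?f B2 = real (card B2) * 24" using uA by (intro sum_const_on) (auto simp: y_B2 d_12b)
    ultimately show ?thesis by (simp add: sumV cards)
  next
    assume uA: "u \<in> A2"
    have "sum ?f A2 = (real (card A2) - 1) * (-21)" using finA uA
      by (intro sum_same_on) (auto simp: y_A2 dA2)
    moreover have "sum ?f A1 = real (card A1) * 30" using uA by (intro sum_const_on) (auto simp: y_A1 dd)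
    moreover have "sum ?f B1 = real (card B1) * (-24)" using uA by (intro sum_const_on) (auto simp: y_B1 d_12c)
    moreover have "sum ?f B2 = real (card B2) * 12" using uA by (intro sum_const_on) (auto simp: y_B2 d_6b)
    ultimately show ?thesis by (simp add: sumV cards)
  next
    assume uA: "u \<in> B1"
    have "sum ?f B1 = (real (card B1) - 1) * (-14)" using finA uA
      by (intro sum_same_on) (auto simp: y_B1 dB1)
    moreover have "sum ?f A1 = real (card A1) * 18" using uA by (intro sum_const_on) (auto simp: y_A1 dd)
    moreover have "sum ?f A2 = real (card A2) * (-36)" using uA by (intro sum_const_on) (auto simp: y_A2 dd)
    moreover have "sum ?f B2 = real (card B2) * 24" using uA by (intro sum_const_on) (auto simp: y_B2 d_12a)
    ultimately show ?thesis by (simp add: sumV cards)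
  next
    assume uA: "u \<in> B2"
    have "sum ?f B2 = (real (card B2) - 1) * 14" using finA uA
      by (intro sum_same_on) (auto simp: y_B2 dB2)
    moreover have "sum ?f A1 = real (card A1) * 36" using uA by (intro sum_const_on) (auto simp: y_A1 dd)
    moreover have "sum ?f A2 = real (card A2) * (-18)" using uA by (intro sum_const_on) (auto simp: y_A2 dd)
    moreover have "sum ?f B1 = real (card B1) * (-24)" using uA by (intro sum_const_on) (auto simp: y_B1 dd)
    ultimately show ?thesis by (simp add: sumV cards)
  qed
qed

lemma sum_y: "(\<Sum>v\<in>V. y v) = 0"
proof -
  have "sum y A1 = real (card A1) * 3" by (intro sum_const_on) (simp add: y_A1)
  moreover have "sum y A2 = real (card A2) * (-3)" by (intro sum_const_on) (simp add: y_A2)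
  moreover have "sum y B1 = real (card B1) * (-2)" by (intro sum_const_on) (simp add: y_B1)
  moreover have "sum y B2 = real (card B2) * 2" by (intro sum_const_on) (simp add: y_B2)
  ultimately show ?thesis by (simp add: sumV cards)
qed

lemma dep_y: "(\<Sum>v\<in>V. y v *\<^sub>R v) = 0"
proof -
  have "(\<Sum>u\<in>V. \<Sum>v\<in>V. y u * y v * (norm (u - v))\<^sup>2) = 0"
    using row_zero by (simp add: mult.assoc sum_distrib_left[symmetric])
  then have "(norm (\<Sum>v\<in>V. y v *\<^sub>R (v - 0)))\<^sup>2 = 0"
    using quad_identity[OF finV, of y 0] sum_y by simp
  then show ?thesis by simp
qed

lemma V_decomp: obtains u0 where "u0 \<notin> Wd" "V = insert u0 Wd"
proof -
  have "card (V - Wd) = 1" using Wd V14 finV by (simp add: card_Diff_subset finite_subset)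
  then obtain u0 where "V - Wd = {u0}" by (rule card_1_singletonE)
  then show ?thesis using that Wd by blast
qed

lemma dep_unique:
  assumes t1: "(\<Sum>v\<in>V. t v) = 0" and t2: "(\<Sum>v\<in>V. t v *\<^sub>R v) = 0"
  shows "\<exists>k. \<forall>v\<in>V. t v = k * y v"
proof -
  obtain u0 where u0: "u0 \<notin> Wd" "V = insert u0 Wd" by (rule V_decomp)
  have finW: "finite Wd" using finV u0 by auto
  define k where "k = t u0 / y u0"
  define s where "s v = t v - k * y v" for v
  have yu0: "y u0 \<noteq> 0" using y_nz u0 by auto
  have su0: "s u0 = 0" using yu0 by (simp add: s_def k_def)
  have "(\<Sum>v\<in>V. s v) = 0" using t1 sum_y by (simp add: s_def sum_subtractf sum_distrib_left[symmetric])
  then have sW1: "(\<Sum>v\<in>Wd. s v) = 0" using u0 finW su0 by simp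
  have "(\<Sum>v\<in>V. s v *\<^sub>R v) = 0" using t2 dep_y
    by (simp add: s_def scaleR_diff_left sum_subtractf scaleR_sum_right[symmetric] flip: scaleR_scaleR)
  then have sW2: "(\<Sum>v\<in>Wd. s v *\<^sub>R v) = 0" using u0 finW su0 by simp
  have "\<forall>v\<in>Wd. s v = 0"
    using Wd(2) affine_dependent_explicit_finite[OF finW] sW1 sW2 by blast
  then have "\<forall>v\<in>V. s v = 0" using su0 u0 by auto
  then show ?thesis by (auto simp: s_def)
qed

lemma on_sphere: "v \<in> V \<Longrightarrow> norm (v - c) = r"
  using Vdef by (auto simp: dist_norm norm_minus_commute)

lemma r_nonneg: "r \<ge> 0"
proof -
  have "V \<noteq> {}" using V14 by auto
  then obtain v where "v \<in> V" by auto
  then show ?thesis using on_sphere[of v] by (metis norm_ge_zero)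
qed

lemma Qd_identity:
  assumes "(\<Sum>v\<in>V. b v) = 1"
  shows "(\<Sum>u\<in>V. \<Sum>v\<in>V. b u * b v * (norm (u - v))\<^sup>2) = 2 * r\<^sup>2 - 2 * (norm ((\<Sum>v\<in>V. b v *\<^sub>R v) - c))\<^sup>2"
proof -
  have "(\<Sum>v\<in>V. b v * (norm (v - c))\<^sup>2) = (\<Sum>v\<in>V. b v * r\<^sup>2)"
    using on_sphere by simp
  also have "\<dots> = r\<^sup>2" using assms by (simp add: sum_distrib_right[symmetric])
  finally have h: "(\<Sum>v\<in>V. b v * (norm (v - c))\<^sup>2) = r\<^sup>2" .
  show ?thesis using quad_identity[OF finV, of b c] h assms by (simp add: sum_smul_minus_c)
qed

lemma Q0_identity:
  assumes "(\<Sum>v\<in>V. b v) = 0"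
  shows "(\<Sum>u\<in>V. \<Sum>v\<in>V. b u * b v * (norm (u - v))\<^sup>2) = - 2 * (norm (\<Sum>v\<in>V. b v *\<^sub>R v))\<^sup>2"
  using quad_identity[OF finV, of b 0] assms by simp

lemma part1: "\<forall>u\<in>V. K_affine_basis UNIV V (V - {u})"
proof
  fix u assume u: "u \<in> V"
  have card: "card (V - {u}) = DIM(real^12) + 1" using u V14 finV by (simp add: card_Diff_singleton)
  have "K_generating UNIV V (V - {u})"
    unfolding K_generating_def
  proof (intro conjI ballI)
    show "V - {u} \<subseteq> V" by auto
    fix w assume w: "w \<in> V"
    show "\<exists>z. (\<forall>v\<in>V - {u}. z v \<in> UNIV) \<and> w = (\<Sum>v\<in>V - {u}. z v *\<^sub>R v) \<and> sum z (V - {u}) = 1"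
    proof (cases "w = u")
      case False
      have "(\<Sum>v\<in>V - {u}. (if v = w then 1 else 0) *\<^sub>R v) = (\<Sum>v\<in>V - {u}. if v = w then w else 0)"
        by (intro sum.cong) auto
      also have "\<dots> = w" using False w finV by (simp add: sum.delta')
      finally have e: "(\<Sum>v\<in>V - {u}. (if v = w then 1 else 0) *\<^sub>R v) = w" .
      have e2: "(\<Sum>v\<in>V - {u}. (if v = w then 1 else 0::real)) = 1" using False w finV by (simp add: sum.delta')
      show ?thesis
        by (rule exI[of _ "\<lambda>v. if v = w then 1 else 0"]) (use e e2 in simp)
    next
      case True
      have yu: "y u \<noteq> 0" using y_nz u by auto
      have s1: "(\<Sum>v\<in>V - {u}. y v *\<^sub>R v) = - (y u *\<^sub>R u)"
        using dep_y sum.remove[OF finV u, of "\<lambda>v. y v *\<^sub>R v"] by (simp add: eq_neg_iff_add_eq_0 add.commute)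
      have s2: "(\<Sum>v\<in>V - {u}. y v) = - y u"
        using sum_y sum.remove[OF finV u, of y] by linarith
      show ?thesis
      proof (rule exI[of _ "\<lambda>v. - y v / y u"], intro conjI)
        show "w = (\<Sum>v\<in>V - {u}. (- y v / y u) *\<^sub>R v)"
        proof -
          have "(\<Sum>v\<in>V - {u}. (- y v / y u) *\<^sub>R v) = (- inverse (y u)) *\<^sub>R (\<Sum>v\<in>V - {u}. y v *\<^sub>R v)"
            unfolding scaleR_sum_right by (intro sum.cong refl) (simp add: divide_inverse mult.commute)
          then show ?thesis using s1 yu True by simp
        qed
        show "(\<Sum>v\<in>V - {u}. - y v / y u) = 1"
          using s2 yu by (simp add: sum_divide_distrib[symmetric] sum_negf)
      qed simp
    qed
  qed
  then show "K_affine_basis UNIV V (V - {u})" using card by (simp add: K_affine_basis_def)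
qed

lemma A1_ne: "A1 \<noteq> {}" and B1_ne: "B1 \<noteq> {}" using cards by auto

lemma part2: "int_affine_deps V = {(\<lambda>v. k * yi v) | k. True}"
proof (intro set_eqI iffI)
  fix t assume "t \<in> int_affine_deps V"
  then have t0: "\<forall>v. v \<notin> V \<longrightarrow> t v = 0" and t1: "(\<Sum>v\<in>V. of_int (t v) *\<^sub>R v) = 0"
    and t2: "(\<Sum>v\<in>V. t v) = 0" by (auto simp: int_affine_deps_def)
  have "(\<Sum>v\<in>V. real_of_int (t v)) = 0" using t2 by (metis of_int_0 of_int_sum)
  then obtain k where k: "\<forall>v\<in>V. real_of_int (t v) = k * y v" using dep_unique[OF _ t1] by blast
  obtain a where a: "a \<in> A1" using A1_ne by auto
  obtain b where b: "b \<in> B1" using B1_ne by auto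
  have "real_of_int (t a) = 3 * k" "real_of_int (t b) = -2 * k"
    using k a b Vpart y_A1 y_B1 by auto
  then have kk: "k = real_of_int (t a + t b)" by simp
  have "t = (\<lambda>v. (t a + t b) * yi v)"
  proof
    fix v show "t v = (t a + t b) * yi v"
    proof (cases "v \<in> V")
      case True
      then have "real_of_int (t v) = real_of_int ((t a + t b) * yi v)" using k kk by (simp add: y_def)
      then show ?thesis by linarith
    next
      case False then show ?thesis using t0 yi_out by simp
    qed
  qed
  then show "t \<in> {(\<lambda>v. k * yi v) | k. True}" by blast
next
  fix t assume "t \<in> {(\<lambda>v. k * yi v) | k. True}"
  then obtain k where t: "t = (\<lambda>v. k * yi v)" by blast
  have "(\<Sum>v\<in>V. of_int (t v) *\<^sub>R v) = of_int k *\<^sub>R (\<Sum>v\<in>V. y v *\<^sub>R v)"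
    by (simp add: t y_def scaleR_sum_right)
  also have "\<dots> = 0" using dep_y by simp
  finally have 1: "(\<Sum>v\<in>V. of_int (t v) *\<^sub>R v) = 0" .
  have "real_of_int (\<Sum>v\<in>V. t v) = of_int k * (\<Sum>v\<in>V. y v)"
    by (simp add: t y_def sum_distrib_left)
  then have "real_of_int (\<Sum>v\<in>V. t v) = 0" using sum_y by simp
  then have 2: "(\<Sum>v\<in>V. t v) = 0" by linarith
  have 3: "\<forall>v. v \<notin> V \<longrightarrow> t v = 0" using yi_out t by simp
  show "t \<in> int_affine_deps V" using 1 2 3 by (simp add: int_affine_deps_def)
qed

lemma part3: "\<not> K_basic \<int> V"
proof
  assume "K_basic \<int> V"
  then obtain W where gen: "K_generating \<int> V W" and cW: "card W = DIM(real^12) + 1"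
    by (auto simp: K_basic_def K_affine_basis_def)
  have WV: "W \<subseteq> V" using gen by (simp add: K_generating_def)
  have "card (V - W) = 1" using WV cW V14 finV by (simp add: card_Diff_subset finite_subset)
  then obtain u where u: "V - W = {u}" by (rule card_1_singletonE)
  have uV: "u \<in> V" and uW: "u \<notin> W" using u by auto
  have Weq: "W = V - {u}" using u WV by blast
  obtain z where z: "\<forall>v\<in>W. z v \<in> \<int>" "u = (\<Sum>v\<in>W. z v *\<^sub>R v)" "sum z W = 1"
    using gen uV by (auto simp: K_generating_def)
  define t where "t v = (if v = u then 1 else - z v)" for v
  have finW: "finite W" using Weq finV by simp
  have "(\<Sum>v\<in>V. t v) = t u + (\<Sum>v\<in>W. t v)" using Weq sum.remove[OF finV uV, of t] by simp
  also have "(\<Sum>v\<in>W. t v) = (\<Sum>v\<in>W. - z v)" using uW by (intro sum.cong) (auto simp: t_def)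
  finally have t1: "(\<Sum>v\<in>V. t v) = 0" using z by (simp add: t_def sum_negf)
  have "(\<Sum>v\<in>V. t v *\<^sub>R v) = t u *\<^sub>R u + (\<Sum>v\<in>W. t v *\<^sub>R v)"
    using Weq sum.remove[OF finV uV, of "\<lambda>v. t v *\<^sub>R v"] by simp
  also have "(\<Sum>v\<in>W. t v *\<^sub>R v) = (\<Sum>v\<in>W. - (z v *\<^sub>R v))" using uW by (intro sum.cong) (auto simp: t_def)
  finally have t2: "(\<Sum>v\<in>V. t v *\<^sub>R v) = 0" using z by (simp add: t_def sum_negf)
  obtain k where k: "\<forall>v\<in>V. t v = k * y v" using dep_unique[OF t1 t2] by blast
  have "t u = k * y u" using k uV by blast
  then have ku: "k * y u = 1" by (simp add: t_def)
  have rel: "z v * y u = - y v" if "v \<in> W" for v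
  proof -
    have "t v = - z v" using that uW by (auto simp: t_def)
    then have "- z v = k * y v" using k that WV by auto
    then have "- z v * y u = y v * (k * y u)" by simp
    then show ?thesis using ku by simp
  qed
  consider (A) "u \<in> A1 \<or> u \<in> A2" | (B1) "u \<in> B1" | (B2) "u \<in> B2" using uV Vpart by auto
  then show False
  proof cases
    case A
    note uA = A
    obtain v where v: "v \<in> B1" using B1_ne by auto
    have vW: "v \<in> W" using v uA disj Weq Vpart by auto
    obtain m where m: "z v = of_int m" using z(1) vW Ints_cases by metis
    have "real_of_int m * y u = 2" using rel[OF vW] m y_B1[OF v] by simp
    then have "real_of_int (m * 3) = 2 \<or> real_of_int (m * 3) = -2" using uA y_A1 y_A2 by auto
    then have "m * 3 = 2 \<or> m * 3 = -2" by linarith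
    then show False by presburger
  next
    case B1
    note uB = B1
    obtain v where v: "v \<in> A1" using A1_ne by auto
    have vW: "v \<in> W" using v uB disj Weq Vpart by auto
    obtain m where m: "z v = of_int m" using z(1) vW Ints_cases by metis
    have "real_of_int (m * 2) = 3" using rel[OF vW] m y_A1[OF v] y_B1[OF uB] by simp
    then have "m * 2 = 3" by linarith
    then show False by presburger
  next
    case B2
    note uB = B2
    obtain v where v: "v \<in> A1" using A1_ne by auto
    have vW: "v \<in> W" using v uB disj Weq Vpart by auto
    obtain m where m: "z v = of_int m" using z(1) vW Ints_cases by metis
    have "real_of_int (m * 2) = -3" using rel[OF vW] m y_A1[OF v] y_B2[OF uB] by simp
    then have "m * 2 = -3" by linarith
    then show False by presburger
  qed
qed


definition Q :: "((real^12) \<times> (real^12) \<Rightarrow> real) \<Rightarrow> (real^12 \<Rightarrow> real) \<Rightarrow> real" where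
  "Q h b = (\<Sum>u\<in>V. \<Sum>v\<in>V. b u * b v * h (u, v))"

definition dV :: "(real^12) \<times> (real^12) \<Rightarrow> real" where "dV = dist_fun V"

definition supp :: "(real^12 \<Rightarrow> int) \<Rightarrow> bool" where "supp b \<longleftrightarrow> (\<forall>v. v \<notin> V \<longrightarrow> b v = 0)"

lemma HYP_sum_Q: "(\<Sum>u\<in>V. \<Sum>v\<in>V. of_int (b u * b v) * h (u, v)) = Q h (\<lambda>v. of_int (b v))"
  by (simp add: Q_def)

lemma HYP_iff: "h \<in> HYP V \<longleftrightarrow> (\<forall>u v. (u \<notin> V \<or> v \<notin> V) \<longrightarrow> h (u, v) = 0) \<and>
      (\<forall>u v. h (u, v) = h (v, u)) \<and> (\<forall>v. h (v, v) = 0) \<and>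
      (\<forall>b. supp b \<longrightarrow> (\<Sum>v\<in>V. b v) = 1 \<longrightarrow> Q h (\<lambda>v. of_int (b v)) \<le> 0)"
  unfolding HYP_def supp_def HYP_sum_Q by simp

lemma Q_lin: "Q (\<lambda>x. \<alpha> * a x + \<beta> * b x) g = \<alpha> * Q a g + \<beta> * Q b g"
  by (simp add: Q_def sum_distrib_left sum.distrib algebra_simps)

lemma Q_dV: "Q dV b = (\<Sum>u\<in>V. \<Sum>v\<in>V. b u * b v * (norm (u - v))\<^sup>2)"
  unfolding Q_def dV_def dist_fun_def by (intro sum.cong refl) simp

lemma Q_dV_aff:
  assumes "(\<Sum>v\<in>V. b v) = 1"
  shows "Q dV b = 2 * r\<^sup>2 - 2 * (norm ((\<Sum>v\<in>V. b v *\<^sub>R v) - c))\<^sup>2"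
  using Qd_identity[OF assms] Q_dV by simp

lemma sum_of_int_1: "(\<Sum>v\<in>V. b v) = (1::int) \<Longrightarrow> (\<Sum>v\<in>V. real_of_int (b v)) = 1"
  by (metis of_int_1 of_int_sum)

lemma dV_HYP: "dV \<in> HYP V"
  unfolding HYP_iff
proof (intro conjI allI impI)
  fix b assume "supp b" "(\<Sum>v\<in>V. b v) = 1"
  then have s1: "(\<Sum>v\<in>V. real_of_int (b v)) = 1" using sum_of_int_1 by blast
  have "(\<Sum>v\<in>V. of_int (b v) *\<^sub>R v) \<in> L" by (rule latsum)
  then have "r\<^sup>2 \<le> (norm ((\<Sum>v\<in>V. of_int (b v) *\<^sub>R v) - c))\<^sup>2" using empty by blast
  then show "Q dV (\<lambda>v. real_of_int (b v)) \<le> 0" using Q_dV_aff[OF s1] by simp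
qed (auto simp: dV_def dist_fun_def norm_minus_commute)

lemma dist_Ints: "u \<in> V \<Longrightarrow> v \<in> V \<Longrightarrow> (norm (u - v))\<^sup>2 \<in> \<int>"
proof -
  assume u: "u \<in> V" and v: "v \<in> V"
  show ?thesis
  proof (cases "u = v")
    case False
    have "u \<in> A1 \<or> u \<in> A2 \<or> u \<in> B1 \<or> u \<in> B2" "v \<in> A1 \<or> v \<in> A2 \<or> v \<in> B1 \<or> v \<in> B2"
      using u v Vpart by auto
    then have "(norm (u - v))\<^sup>2 \<in> {6, 7, 10, 12}"
      apply (elim disjE)
      apply (simp_all add: False dA1 dA2 dB1 dB2 d_6a d_6b d_10 d_12a d_12b d_12c dd)
      done
    then show ?thesis by auto
  qed simp
qed

lemma Q_Ints: "Q dV (\<lambda>v. of_int (b v)) \<in> \<int>"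
  unfolding Q_dV using dist_Ints by (intro Ints_sum Ints_mult) auto

definition TB :: "(real^12 \<Rightarrow> int) set" where
  "TB = {b. supp b \<and> (\<Sum>v\<in>V. b v) = 1 \<and> Q dV (\<lambda>v. of_int (b v)) = 0}"

definition FT :: "((real^12) \<times> (real^12) \<Rightarrow> real) set" where
  "FT = {h \<in> HYP V. \<forall>b\<in>TB. Q h (\<lambda>v. of_int (b v)) = 0}"

lemma FT_face: "fun_face_of FT (HYP V)"
  unfolding fun_face_of_def
proof (intro conjI)
  show "FT \<subseteq> HYP V" by (auto simp: FT_def)
next
  show "\<forall>a\<in>FT. \<forall>b\<in>FT. \<forall>t::real. 0 \<le> t \<and> t \<le> 1 \<longrightarrow> (\<lambda>x. (1 - t) * a x + t * b x) \<in> FT"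
  proof (intro ballI allI impI)
  fix a b and t :: real assume a: "a \<in> FT" and b: "b \<in> FT" and t: "0 \<le> t \<and> t \<le> 1"
  have aH: "a \<in> HYP V" and bH: "b \<in> HYP V" using a b by (auto simp: FT_def)
  have "(\<lambda>x. (1 - t) * a x + t * b x) \<in> HYP V"
    unfolding HYP_iff
  proof (intro conjI allI impI)
    fix g assume "supp g" "(\<Sum>v\<in>V. g v) = 1"
    then have "Q a (\<lambda>v. of_int (g v)) \<le> 0" "Q b (\<lambda>v. of_int (g v)) \<le> 0"
      using aH bH unfolding HYP_iff by auto
    then show "Q (\<lambda>x. (1 - t) * a x + t * b x) (\<lambda>v. of_int (g v)) \<le> 0"
      unfolding Q_lin using t by (simp add: add_nonpos_nonpos mult_nonneg_nonpos)
  qed (use aH bH in \<open>auto simp: HYP_iff\<close>)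
  moreover have "\<forall>g\<in>TB. Q (\<lambda>x. (1 - t) * a x + t * b x) (\<lambda>v. of_int (g v)) = 0"
    using a b unfolding Q_lin FT_def by auto
  ultimately show "(\<lambda>x. (1 - t) * a x + t * b x) \<in> FT" by (simp add: FT_def)
  qed
next
  show "\<forall>a\<in>HYP V. \<forall>b\<in>HYP V. \<forall>t::real. 0 < t \<and> t < 1 \<longrightarrow> (\<lambda>x. (1 - t) * a x + t * b x) \<in> FT \<longrightarrow> a \<in> FT \<and> b \<in> FT"
  proof (intro ballI allI impI)
  fix a b and t :: real assume aH: "a \<in> HYP V" and bH: "b \<in> HYP V" and t: "0 < t \<and> t < 1"
    and ab: "(\<lambda>x. (1 - t) * a x + t * b x) \<in> FT"
  have "\<forall>g\<in>TB. Q a (\<lambda>v. of_int (g v)) = 0 \<and> Q b (\<lambda>v. of_int (g v)) = 0"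
  proof
    fix g assume g: "g \<in> TB"
    then have h: "Q a (\<lambda>v. of_int (g v)) \<le> 0" "Q b (\<lambda>v. of_int (g v)) \<le> 0"
      using aH bH unfolding HYP_iff TB_def by auto
    have h3: "(1 - t) * Q a (\<lambda>v. of_int (g v)) + t * Q b (\<lambda>v. of_int (g v)) = 0"
      using ab g unfolding FT_def by (auto simp: Q_lin)
    have "(1 - t) * Q a (\<lambda>v. of_int (g v)) \<le> 0" using h t by (simp add: mult_nonneg_nonpos)
    moreover have "t * Q b (\<lambda>v. of_int (g v)) \<le> 0" using h t by (simp add: mult_nonneg_nonpos)
    ultimately have "(1 - t) * Q a (\<lambda>v. of_int (g v)) = 0" "t * Q b (\<lambda>v. of_int (g v)) = 0"
      using h3 by linarith+
    then show "Q a (\<lambda>v. of_int (g v)) = 0 \<and> Q b (\<lambda>v. of_int (g v)) = 0" using t by simp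
  qed
  then show "a \<in> FT \<and> b \<in> FT" using aH bH by (auto simp: FT_def)
  qed
qed

lemma dV_FT: "dV \<in> FT" using dV_HYP by (auto simp: FT_def TB_def)

lemma min_face_FT: "min_face (HYP V) dV \<subseteq> FT"
  unfolding min_face_def using FT_face dV_FT by blast

lemma sum_yi: "(\<Sum>v\<in>V. yi v) = 0"
proof -
  have "real_of_int (\<Sum>v\<in>V. yi v) = 0" using sum_y by (simp add: y_def)
  then show ?thesis by linarith
qed

lemma delta_sum: "w \<in> V \<Longrightarrow> (\<Sum>v\<in>V. (if v = w then 1 else 0) * f v) = (f w :: real)"
proof -
  assume w: "w \<in> V"
  have "(\<Sum>v\<in>V. (if v = w then 1 else 0) * f v) = (\<Sum>v\<in>V. if v = w then f v else 0)"
    by (intro sum.cong) auto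
  then show ?thesis using w finV by (simp add: sum.delta')
qed

lemma Q_expand:
  assumes w: "w \<in> V" and sym: "\<forall>u v. h (u, v) = h (v, u)" and diag: "\<forall>v. h (v, v) = 0"
  shows "Q h (\<lambda>v. (if v = w then 1 else 0) + k * y v) = 2 * k * (\<Sum>v\<in>V. y v * h (w, v)) + k\<^sup>2 * Q h y"
proof -
  let ?d = "\<lambda>v. if v = w then 1 else (0::real)"
  have "Q h (\<lambda>v. ?d v + k * y v) = (\<Sum>u\<in>V. \<Sum>v\<in>V. ?d u * (?d v * h (u, v)) + k * (?d u * (y v * h (u, v))) + k * (?d v * (y u * h (u, v))) + k\<^sup>2 * (y u * y v * h (u, v)))"
    unfolding Q_def by (intro sum.cong refl) (simp add: algebra_simps power2_eq_square)
  also have "\<dots> = (\<Sum>u\<in>V. ?d u * (\<Sum>v\<in>V. ?d v * h (u, v))) + k * (\<Sum>u\<in>V. ?d u * (\<Sum>v\<in>V. y v * h (u, v)))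
       + k * (\<Sum>u\<in>V. \<Sum>v\<in>V. ?d v * (y u * h (u, v))) + k\<^sup>2 * Q h y"
    by (simp add: sum.distrib sum_distrib_left Q_def)
  also have "(\<Sum>u\<in>V. \<Sum>v\<in>V. ?d v * (y u * h (u, v))) = (\<Sum>u\<in>V. y u * h (u, w))"
    by (intro sum.cong refl) (rule delta_sum[OF w])
  also have "(\<Sum>u\<in>V. y u * h (u, w)) = (\<Sum>v\<in>V. y v * h (w, v))" using sym by metis
  also have "(\<Sum>u\<in>V. ?d u * (\<Sum>v\<in>V. ?d v * h (u, v))) = 0"
    using delta_sum[OF w] diag by simp
  also have "(\<Sum>u\<in>V. ?d u * (\<Sum>v\<in>V. y v * h (u, v))) = (\<Sum>v\<in>V. y v * h (w, v))"
    by (rule delta_sum[OF w])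
  finally show ?thesis by simp
qed

lemma tight_b:
  assumes w: "w \<in> V"
  shows "(\<lambda>v. (if v = w then 1 else 0) + k * yi v) \<in> TB"
proof -
  let ?b = "\<lambda>v. (if v = w then 1 else 0) + k * yi v"
  have sp: "supp ?b" using yi_out w by (auto simp: supp_def)
  have s1: "(\<Sum>v\<in>V. ?b v) = 1" using w finV sum_yi by (simp add: sum.distrib sum_distrib_left[symmetric])
  then have s1r: "(\<Sum>v\<in>V. real_of_int (?b v)) = 1" using sum_of_int_1 by blast
  have "(\<Sum>v\<in>V. real_of_int (?b v) *\<^sub>R v) = (\<Sum>v\<in>V. (if v = w then v else 0) + of_int k *\<^sub>R (y v *\<^sub>R v))"
    by (intro sum.cong refl) (simp add: y_def scaleR_add_left)
  also have "\<dots> = w" using w finV dep_y by (simp add: sum.distrib scaleR_sum_right[symmetric] sum.delta' del: scaleR_scaleR)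
  finally have "Q dV (\<lambda>v. real_of_int (?b v)) = 0"
    using Q_dV_aff[OF s1r] on_sphere[OF w] by simp
  then show ?thesis using sp s1 by (simp add: TB_def)
qed

lemma FT_row:
  assumes h: "h \<in> FT" and w: "w \<in> V"
  shows "(\<Sum>v\<in>V. y v * h (w, v)) = 0"
proof -
  have hH: "h \<in> HYP V" using h by (simp add: FT_def)
  have sym: "\<forall>u v. h (u, v) = h (v, u)" and diag: "\<forall>v. h (v, v) = 0" using hH by (auto simp: HYP_iff)
  have "Q h (\<lambda>v. real_of_int ((if v = w then 1 else 0) + k * yi v)) = 0" for k
    using h tight_b[OF w, of k] by (auto simp: FT_def)
  then have "Q h (\<lambda>v. (if v = w then 1 else 0) + real_of_int k * y v) = 0" for k
  proof -
    fix k :: int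
    assume a: "\<And>k. Q h (\<lambda>v. real_of_int ((if v = w then 1 else 0) + k * yi v)) = 0"
    have "(\<lambda>v. real_of_int ((if v = w then 1 else 0) + k * yi v)) = (\<lambda>v. (if v = w then 1 else 0) + real_of_int k * y v)"
      by (auto simp: y_def)
    then show "Q h (\<lambda>v. (if v = w then 1 else 0) + real_of_int k * y v) = 0" using a[of k] by simp
  qed
  from this[of 1] this[of "-1"] show ?thesis
    unfolding Q_expand[OF w sym diag] by simp
qed

lemma W_indep:
  assumes u0: "u0 \<in> V"
  shows "\<not> affine_dependent (V - {u0})"
proof
  assume "affine_dependent (V - {u0})"
  then obtain U where U: "sum U (V - {u0}) = 0" "\<exists>v\<in>V - {u0}. U v \<noteq> 0" "(\<Sum>v\<in>V - {u0}. U v *\<^sub>R v) = 0"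
    using affine_dependent_explicit_finite[of "V - {u0}"] finV by auto
  define t where "t v = (if v = u0 then 0 else U v)" for v
  have "(\<Sum>v\<in>V. t v) = t u0 + (\<Sum>v\<in>V - {u0}. t v)" using sum.remove[OF finV u0] by simp
  also have "(\<Sum>v\<in>V - {u0}. t v) = sum U (V - {u0})" by (intro sum.cong) (auto simp: t_def)
  finally have t1: "(\<Sum>v\<in>V. t v) = 0" using U by (simp add: t_def)
  have "(\<Sum>v\<in>V. t v *\<^sub>R v) = t u0 *\<^sub>R u0 + (\<Sum>v\<in>V - {u0}. t v *\<^sub>R v)" using sum.remove[OF finV u0] by simp
  also have "(\<Sum>v\<in>V - {u0}. t v *\<^sub>R v) = (\<Sum>v\<in>V - {u0}. U v *\<^sub>R v)" by (intro sum.cong) (auto simp: t_def)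
  finally have t2: "(\<Sum>v\<in>V. t v *\<^sub>R v) = 0" using U by (simp add: t_def)
  obtain k where k: "\<forall>v\<in>V. t v = k * y v" using dep_unique[OF t1 t2] by blast
  have "k * y u0 = 0" using k u0 by (metis t_def)
  then have "k = 0" using y_nz u0 by simp
  have "\<forall>v\<in>V - {u0}. U v = 0"
  proof
    fix v assume v: "v \<in> V - {u0}"
    then have "t v = 0" using k \<open>k = 0\<close> by simp
    then show "U v = 0" using v by (simp add: t_def)
  qed
  then show False using U by blast
qed

lemma lin_bound:
  assumes lam: "(\<Sum>v\<in>V. lm v * y v) = 0"
  shows "\<exists>K. \<forall>x. (\<Sum>v\<in>V. x v) = 0 \<longrightarrow> \<bar>\<Sum>v\<in>V. lm v * x v\<bar> \<le> K * norm (\<Sum>v\<in>V. x v *\<^sub>R v)"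
proof -
  have "V \<noteq> {}" using V14 by auto
  then obtain u0 where u0: "u0 \<in> V" by auto
  define W where "W = V - {u0}"
  have finW: "finite W" using finV by (simp add: W_def)
  have VW: "V = insert u0 W" "u0 \<notin> W" using u0 by (auto simp: W_def)
  have "card W = 13" using u0 V14 finV by (simp add: W_def card_Diff_singleton)
  then have "W \<noteq> {}" by auto
  then obtain w0 where w0: "w0 \<in> W" by auto
  have indW: "\<not> affine_dependent W" unfolding W_def by (rule W_indep[OF u0])
  have "insert w0 (W - {w0}) = W" using w0 by auto
  then have "\<not> dependent ((\<lambda>x. - w0 + x) ` (W - {w0}))"
    using indW affine_dependent_iff_dependent[of w0 "W - {w0}"] by simp
  then obtain g where g: "linear g" "\<forall>z\<in>(\<lambda>x. - w0 + x) ` (W - {w0}). g z = lm (w0 + z) - lm w0"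
    using linear_independent_extend[of "(\<lambda>x. - w0 + x) ` (W - {w0})" "\<lambda>z. lm (w0 + z) - lm w0"] by blast
  have gW: "g (- w0 + v) = lm v - lm w0" if "v \<in> W" for v
  proof (cases "v = w0")
    case True
    then show ?thesis using linear_0[OF g(1)] by simp
  next
    case False
    then show ?thesis using g(2) that by auto
  qed
  obtain K where K: "\<forall>z. norm (g z) \<le> K * norm z" using linear_bounded[OF g(1)] by blast
  show ?thesis
  proof (intro exI[of _ K] allI impI)
    fix x :: "real^12 \<Rightarrow> real" assume x0: "(\<Sum>v\<in>V. x v) = 0"
    define x' where "x' v = x v - (x u0 / y u0) * y v" for v
    have yu0: "y u0 \<noteq> 0" using y_nz u0 by simp
    have x'u0: "x' u0 = 0" using yu0 by (simp add: x'_def)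
    have "(\<Sum>v\<in>V. x' v) = (\<Sum>v\<in>V. x v) - (x u0 / y u0) * (\<Sum>v\<in>V. y v)"
      by (simp add: x'_def sum_subtractf sum_distrib_left)
    then have "(\<Sum>v\<in>V. x' v) = 0" using x0 sum_y by simp
    then have sW: "(\<Sum>v\<in>W. x' v) = 0" using VW finW x'u0 by simp
    have "(\<Sum>v\<in>V. lm v * x' v) = (\<Sum>v\<in>V. lm v * x v) - (x u0 / y u0) * (\<Sum>v\<in>V. lm v * y v)"
      by (simp add: x'_def algebra_simps sum_subtractf sum_distrib_left)
    then have l1: "(\<Sum>v\<in>V. lm v * x v) = (\<Sum>v\<in>W. lm v * x' v)" using lam VW finW x'u0 by simp
    have "(\<Sum>v\<in>W. lm v * x' v) = (\<Sum>v\<in>W. (lm v - lm w0) * x' v) + lm w0 * (\<Sum>v\<in>W. x' v)"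
      by (simp add: algebra_simps sum.distrib sum_distrib_left sum_subtractf)
    then have l2: "(\<Sum>v\<in>V. lm v * x v) = (\<Sum>v\<in>W. x' v * g (- w0 + v))" using l1 sW gW by (simp add: mult.commute)
    have "(\<Sum>v\<in>V. x' v *\<^sub>R v) = (\<Sum>v\<in>V. x v *\<^sub>R v) - (x u0 / y u0) *\<^sub>R (\<Sum>v\<in>V. y v *\<^sub>R v)"
      by (simp add: x'_def scaleR_diff_left sum_subtractf scaleR_sum_right)
    then have m1: "(\<Sum>v\<in>V. x v *\<^sub>R v) = (\<Sum>v\<in>W. x' v *\<^sub>R v)" using dep_y VW finW x'u0 by simp
    have "(\<Sum>v\<in>W. x' v *\<^sub>R (- w0 + v)) = (\<Sum>v\<in>W. x' v *\<^sub>R v) - (\<Sum>v\<in>W. x' v) *\<^sub>R w0"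
      by (simp add: scaleR_diff_right sum_subtractf scaleR_sum_left)
    then have m2: "(\<Sum>v\<in>V. x v *\<^sub>R v) = (\<Sum>v\<in>W. x' v *\<^sub>R (- w0 + v))" using m1 sW by simp
    have "g (\<Sum>v\<in>V. x v *\<^sub>R v) = (\<Sum>v\<in>W. x' v * g (- w0 + v))"
      unfolding m2 using g(1) by (simp add: linear_sum linear_scale)
    then have "(\<Sum>v\<in>V. lm v * x v) = g (\<Sum>v\<in>V. x v *\<^sub>R v)" using l2 by simp
    then show "\<bar>\<Sum>v\<in>V. lm v * x v\<bar> \<le> K * norm (\<Sum>v\<in>V. x v *\<^sub>R v)" using K[rule_format, of "\<Sum>v\<in>V. x v *\<^sub>R v"] by simp
  qed
qed

lemma delta_bound:
  assumes s: "s \<in> V" and p0: "p0 \<in> V" and sp: "s \<noteq> p0"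
  shows "\<exists>C. \<forall>b::real^12 \<Rightarrow> int. (\<Sum>v\<in>V. b v) = 1 \<longrightarrow> Q dV (\<lambda>v. of_int (b v)) \<le> -1 \<longrightarrow>
           (of_int (b s) / y s - of_int (b p0) / y p0)\<^sup>2 \<le> C * (- Q dV (\<lambda>v. of_int (b v)))"
proof -
  define lm where "lm v = (if v = s then 1 / y s else 0) - (if v = p0 then 1 / y p0 else 0)" for v
  have ys: "y s \<noteq> 0" and yp: "y p0 \<noteq> 0" using y_nz s p0 by auto
  have lmx: "(\<Sum>v\<in>V. lm v * x v) = x s / y s - x p0 / y p0" for x
  proof -
    have "(\<Sum>v\<in>V. lm v * x v) = (\<Sum>v\<in>V. (if v = s then x s / y s else 0)) - (\<Sum>v\<in>V. (if v = p0 then x p0 / y p0 else 0))"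
      unfolding sum_subtractf[symmetric] by (intro sum.cong refl) (auto simp: lm_def)
    then show ?thesis using s p0 finV by (simp add: sum.delta')
  qed
  have "(\<Sum>v\<in>V. lm v * y v) = 0" using lmx[of y] ys yp by simp
  then obtain K where K: "\<forall>x. (\<Sum>v\<in>V. x v) = 0 \<longrightarrow> \<bar>\<Sum>v\<in>V. lm v * x v\<bar> \<le> K * norm (\<Sum>v\<in>V. x v *\<^sub>R v)"
    using lin_bound by blast
  define K' where "K' = max K 0"
  have K': "K' \<ge> 0" "\<And>z. K * norm z \<le> K' * norm (z :: real^12)"
    by (auto simp: K'_def intro!: mult_right_mono)
  define m where "m = \<bar>1 / y p0\<bar>"
  define C where "C = 6 * K'\<^sup>2 * r\<^sup>2 + 2 * K'\<^sup>2 + 3 * m\<^sup>2"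
  show ?thesis
  proof (intro exI[of _ C] allI impI)
    fix b :: "real^12 \<Rightarrow> int"
    assume b1: "(\<Sum>v\<in>V. b v) = 1" and bq: "Q dV (\<lambda>v. of_int (b v)) \<le> -1"
    define \<beta> where "\<beta> = (\<lambda>v. real_of_int (b v))"
    define q where "q = - Q dV \<beta>"
    have q1: "q \<ge> 1" using bq by (simp add: q_def \<beta>_def)
    have s1: "(\<Sum>v\<in>V. \<beta> v) = 1" using sum_of_int_1[OF b1] by (simp add: \<beta>_def)
    define P where "P = (\<Sum>v\<in>V. \<beta> v *\<^sub>R v)"
    define \<rho> where "\<rho> = norm (P - c)"
    have rho: "\<rho>\<^sup>2 = r\<^sup>2 + q / 2" using Q_dV_aff[OF s1] by (simp add: q_def \<rho>_def P_def field_simps)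
    define x where "x v = \<beta> v - (if v = p0 then 1 else 0)" for v
    have x0: "(\<Sum>v\<in>V. x v) = 0" using s1 p0 finV by (simp add: x_def sum_subtractf)
    have xP: "(\<Sum>v\<in>V. x v *\<^sub>R v) = P - p0"
    proof -
      have "(\<Sum>v\<in>V. x v *\<^sub>R v) = (\<Sum>v\<in>V. \<beta> v *\<^sub>R v) - (\<Sum>v\<in>V. if v = p0 then p0 else 0)"
        unfolding sum_subtractf[symmetric] by (intro sum.cong refl) (simp add: x_def scaleR_diff_left)
      then show ?thesis using p0 finV by (simp add: sum.delta' P_def)
    qed
    define \<delta> where "\<delta> = \<beta> s / y s - \<beta> p0 / y p0"
    have "(\<Sum>v\<in>V. lm v * x v) = \<delta> + 1 / y p0"
      unfolding lmx using sp by (simp add: x_def \<delta>_def diff_divide_distrib)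
    then have "\<bar>\<delta> + 1 / y p0\<bar> \<le> K' * norm (P - p0)" using K x0 xP K'(2)[of "P - p0"] by force
    moreover have "norm (P - p0) \<le> \<rho> + r"
      using norm_triangle_ineq4[of "P - c" "p0 - c"] on_sphere[OF p0] by (simp add: \<rho>_def)
    ultimately have "\<bar>\<delta> + 1 / y p0\<bar> \<le> K' * (\<rho> + r)" using K'(1) by (meson mult_left_mono order_trans)
    moreover have "\<bar>\<delta>\<bar> \<le> \<bar>\<delta> + 1 / y p0\<bar> + m"
      using abs_triangle_ineq4[of "\<delta> + 1 / y p0" "1 / y p0"] by (simp add: m_def)
    ultimately have ad: "\<bar>\<delta>\<bar> \<le> K' * \<rho> + K' * r + m" by (simp add: distrib_left)
    have "\<delta>\<^sup>2 \<le> (K' * \<rho> + K' * r + m)\<^sup>2"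
      using ad by (metis abs_ge_zero order_trans power2_abs power_mono)
    also have "\<dots> \<le> 3 * ((K' * \<rho>)\<^sup>2 + (K' * r)\<^sup>2 + m\<^sup>2)" by (rule sq3)
    also have "(K' * \<rho>)\<^sup>2 = K'\<^sup>2 * r\<^sup>2 + K'\<^sup>2 * q / 2" by (simp add: power_mult_distrib rho algebra_simps)
    finally have d1: "\<delta>\<^sup>2 \<le> 6 * (K'\<^sup>2 * r\<^sup>2) + 3 * K'\<^sup>2 * q / 2 + 3 * m\<^sup>2" by (simp add: power_mult_distrib algebra_simps)
    have "K'\<^sup>2 * r\<^sup>2 * 1 \<le> K'\<^sup>2 * r\<^sup>2 * q" using q1 by (intro mult_left_mono) auto
    moreover have "m\<^sup>2 * 1 \<le> m\<^sup>2 * q" using q1 by (intro mult_left_mono) auto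
    moreover have "0 \<le> K'\<^sup>2 * q" using q1 by simp
    ultimately have "\<delta>\<^sup>2 \<le> C * q" using d1 unfolding C_def by (simp add: algebra_simps)
    then show "(of_int (b s) / y s - of_int (b p0) / y p0)\<^sup>2 \<le> C * (- Q dV (\<lambda>v. of_int (b v)))"
      by (simp add: \<delta>_def \<beta>_def q_def)
  qed
qed

lemma Q_add: "Q (\<lambda>x. f x + g x) b = Q f b + Q g b"
  by (simp add: Q_def algebra_simps sum.distrib)
lemma Q_diff: "Q (\<lambda>x. f x - g x) b = Q f b - Q g b"
  by (simp add: Q_def algebra_simps sum_subtractf)

lemma Q_pt: assumes "s \<in> V" "t \<in> V"
  shows "Q (\<lambda>x. if fst x = s \<and> snd x = t then 1 else 0) b = b s * b t"
proof -
  have "Q (\<lambda>x. if fst x = s \<and> snd x = t then 1 else 0) b = (\<Sum>u\<in>V. (if u = s then 1 else 0) * (\<Sum>v\<in>V. (if v = t then 1 else 0) * (b u * b v)))"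
    unfolding Q_def by (intro sum.cong refl) (auto simp: sum_distrib_left mult_ac intro!: sum.cong)
  also have "\<dots> = b s * b t" using assms by (simp add: delta_sum)
  finally show ?thesis .
qed

lemma Q_ind: assumes "s \<in> V" "t \<in> V" "s \<noteq> t"
  shows "Q (ind s t) b = 2 * b s * b t"
proof -
  have "ind s t = (\<lambda>x. (if fst x = s \<and> snd x = t then 1 else 0) + (if fst x = t \<and> snd x = s then 1 else 0))"
    using assms(3) by (auto simp: fun_eq_iff ind_split[symmetric])
  then show ?thesis using assms by (simp add: Q_add Q_pt)
qed

lemma Q_scaled: "Q (\<lambda>x. if fst x \<in> V \<and> snd x \<in> V then g x / (y (fst x) * y (snd x)) else 0) b = Q g (\<lambda>v. b v / y v)"
  unfolding Q_def using y_nz by (intro sum.cong refl) (simp add: field_simps)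

lemma row_ind: assumes "w \<in> V" "s \<in> V" "t \<in> V" "s \<noteq> t"
  shows "(\<Sum>v\<in>V. ind s t (w, v)) = (if w = s then 1 else 0) + (if w = t then 1 else 0)"
proof -
  have "(\<Sum>v\<in>V. ind s t (w, v)) = (\<Sum>v\<in>V. (if w = s then 1 else 0) * (if v = t then 1 else 0) + (if w = t then 1 else 0) * (if v = s then 1 else 0))"
    using assms by (intro sum.cong refl) (simp add: ind_split)
  also have "\<dots> = (if w = s then 1 else 0) + (if w = t then 1 else 0)"
    using assms finV by (simp add: sum.distrib sum_distrib_left[symmetric] sum.delta')
  finally show ?thesis .
qed

lemma tight_char:
  assumes b1: "(\<Sum>v\<in>V. b v) = (1::int)" and q0: "Q dV (\<lambda>v. of_int (b v)) = 0"
  shows "\<exists>w\<in>V. \<exists>k. \<forall>v\<in>V. real_of_int (b v) = (if v = w then 1 else 0) + k * y v"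
proof -
  have s1: "(\<Sum>v\<in>V. real_of_int (b v)) = 1" using sum_of_int_1[OF b1] .
  define P where "P = (\<Sum>v\<in>V. real_of_int (b v) *\<^sub>R v)"
  have PL: "P \<in> L" unfolding P_def by (rule latsum)
  have "(norm (P - c))\<^sup>2 = r\<^sup>2" using Q_dV_aff[OF s1] q0 by (simp add: P_def)
  then have "norm (P - c) = r" using r_nonneg by (simp add: power2_eq_iff_nonneg)
  then have PV: "P \<in> V" using PL Vdef by (simp add: dist_norm norm_minus_commute)
  define t where "t v = real_of_int (b v) - (if v = P then 1 else 0)" for v
  have t1: "(\<Sum>v\<in>V. t v) = 0" using s1 PV finV by (simp add: t_def sum_subtractf)
  have "(\<Sum>v\<in>V. t v *\<^sub>R v) = (\<Sum>v\<in>V. real_of_int (b v) *\<^sub>R v - (if v = P then P else 0))"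
    by (intro sum.cong refl) (simp add: t_def scaleR_diff_left)
  also have "\<dots> = (\<Sum>v\<in>V. real_of_int (b v) *\<^sub>R v) - P" using PV finV by (simp add: sum_subtractf sum.delta')
  also have "\<dots> = 0" by (simp add: P_def)
  finally have t2: "(\<Sum>v\<in>V. t v *\<^sub>R v) = 0" .
  obtain k where "\<forall>v\<in>V. t v = k * y v" using dep_unique[OF t1 t2] by blast
  then show ?thesis using PV by (intro bexI[of _ P] exI[of _ k]) (auto simp: t_def algebra_simps)
qed

lemma nontight:
  assumes "supp b" "(\<Sum>v\<in>V. b v) = (1::int)" "Q dV (\<lambda>v. of_int (b v)) \<noteq> 0"
  shows "Q dV (\<lambda>v. of_int (b v)) \<le> -1"
proof -
  have le: "Q dV (\<lambda>v. of_int (b v)) \<le> 0" using dV_HYP assms unfolding HYP_iff by blast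
  obtain m where m: "Q dV (\<lambda>v. of_int (b v)) = of_int m" using Q_Ints Ints_cases by metis
  show ?thesis using le assms(3) unfolding m by simp
qed

definition Sy :: "((real^12) \<times> (real^12) \<Rightarrow> real) set" where
  "Sy = {g. (\<forall>u v. (u \<notin> V \<or> v \<notin> V) \<longrightarrow> g (u, v) = 0) \<and> (\<forall>u v. g (u, v) = g (v, u)) \<and>
           (\<forall>v. g (v, v) = 0) \<and> (\<forall>w\<in>V. (\<Sum>v\<in>V. y v * g (w, v)) = 0)}"

lemma FT_diff_Sy: assumes "f \<in> FT" "f0 \<in> FT" shows "(\<lambda>x. f x - f0 x) \<in> Sy"
proof -
  have H: "f \<in> HYP V" "f0 \<in> HYP V" using assms by (auto simp: FT_def)
  have "\<forall>w\<in>V. (\<Sum>v\<in>V. y v * (f (w, v) - f0 (w, v))) = 0"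
    using FT_row[OF assms(1)] FT_row[OF assms(2)] by (simp add: right_diff_distrib sum_subtractf)
  then show ?thesis using H unfolding Sy_def HYP_iff by auto
qed

end

locale conf3 = conf +
  fixes p0 p1 p2 :: "real^12"
  assumes pV: "p0 \<in> V" "p1 \<in> V" "p2 \<in> V"
    and pd: "p0 \<noteq> p1" "p0 \<noteq> p2" "p1 \<noteq> p2"
begin

definition ZB :: "(real^12) set \<Rightarrow> (real^12) \<times> (real^12) \<Rightarrow> real" where
  "ZB B x = indB B x - (\<Sum>u\<in>B. ind p0 u x) + ind p0 p1 x + ind p0 p2 x - ind p1 p2 x"

definition fB :: "(real^12) set \<Rightarrow> (real^12) \<times> (real^12) \<Rightarrow> real" where
  "fB B x = (if fst x \<in> V \<and> snd x \<in> V then ZB B x / (y (fst x) * y (snd x)) else 0)"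

definition Fr :: "(real^12) set set" where
  "Fr = {B. B \<subseteq> V - {p0} \<and> card B = 2} - {{p1, p2}}"

lemma Fr_card: "card Fr = 77"
proof -
  have f: "finite (V - {p0})" using finV by simp
  have c13: "card (V - {p0}) = 13" using pV V14 finV by (simp add: card_Diff_singleton)
  have "card {B. B \<subseteq> V - {p0} \<and> card B = 2} = 78" using n_subsets[OF f, of 2] c13 by (simp add: choose_two)
  moreover have "{p1, p2} \<in> {B. B \<subseteq> V - {p0} \<and> card B = 2}" using pV pd by auto
  moreover have "finite {B. B \<subseteq> V - {p0} \<and> card B = 2}" using f by simp
  ultimately show ?thesis unfolding Fr_def by (simp add: card_Diff_singleton)
qed

lemma Fr_finite: "finite Fr" using Fr_card by (intro card_ge_0_finite) simp

lemma Fr_elem: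
  assumes "B \<in> Fr"
  obtains u v where "B = {u, v}" "u \<noteq> v" "u \<in> V" "v \<in> V" "u \<noteq> p0" "v \<noteq> p0" "{u, v} \<noteq> {p1, p2}"
proof -
  have "card B = 2" "B \<subseteq> V - {p0}" "B \<noteq> {p1, p2}" using assms by (auto simp: Fr_def)
  then obtain u v where "B = {u, v}" "u \<noteq> v" by (meson card_2_iff)
  then show ?thesis using that \<open>B \<subseteq> V - {p0}\<close> \<open>B \<noteq> {p1, p2}\<close> by auto
qed

lemma ZB_expl:
  assumes "u \<noteq> v"
  shows "ZB {u, v} = (\<lambda>x. ind u v x - ind p0 u x - ind p0 v x + ind p0 p1 x + ind p0 p2 x - ind p1 p2 x)"
  using assms by (simp add: ZB_def indB_ind fun_eq_iff)

end


interpretation fv: vector_space "\<lambda>(c::real) (f::'x \<Rightarrow> real) x. c * f x"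
  by unfold_locales (auto simp: fun_eq_iff algebra_simps)

lemma fun_lin_indep_fv:
  fixes D :: "('x \<Rightarrow> real) set"
  assumes "fun_lin_indep D"
  shows "\<not> fv.dependent D"
proof
  assume "fv.dependent D"
  then obtain t u where tu: "finite t" "t \<subseteq> D" "(\<Sum>v\<in>t. (\<lambda>x. u v * v x)) = 0" "\<exists>v\<in>t. u v \<noteq> 0"
    unfolding fv.dependent_explicit by blast
  have fD: "finite D" using assms by (simp add: fun_lin_indep_def)
  define c where "c g = (if g \<in> t then u g else 0)" for g
  have "(\<Sum>g\<in>D. c g * g x) = 0" for x
  proof -
    have "(\<Sum>g\<in>D. c g * g x) = (\<Sum>g\<in>t. c g * g x)"
      using fD tu(2) by (intro sum.mono_neutral_right) (auto simp: c_def)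
    also have "\<dots> = (\<Sum>g\<in>t. u g * g x)" by (intro sum.cong) (auto simp: c_def)
    also have "\<dots> = (\<Sum>v\<in>t. (\<lambda>x. u v * v x)) x" by (rule sum_fun_apply[symmetric])
    also have "\<dots> = 0" using tu(3) by simp
    finally show ?thesis .
  qed
  then have all0: "\<forall>g\<in>D. c g = 0" using assms unfolding fun_lin_indep_def by blast
  obtain v where v: "v \<in> t" "u v \<noteq> 0" using tu(4) by blast
  then have "c v = 0" using all0 tu(2) by blast
  then show False using v by (simp add: c_def)
qed

lemma poly_id: "2 * a * b - 2 * e * a - 2 * e * b + 2 * e * c + 2 * e * d - 2 * c * d
   = 2 * ((a - e) * (b - e) - (c - e) * (d - (e::real)))"
  by (simp add: algebra_simps)

context conf3 begin

lemma fB_fun: "fB B = (\<lambda>x. if fst x \<in> V \<and> snd x \<in> V then ZB B x / (y (fst x) * y (snd x)) else 0)"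
  by (simp add: fun_eq_iff fB_def)

lemma fB_Sy: assumes B: "B \<in> Fr" shows "fB B \<in> Sy"
proof -
  obtain u v where uv: "B = {u, v}" "u \<noteq> v" "u \<in> V" "v \<in> V" "u \<noteq> p0" "v \<noteq> p0" "{u, v} \<noteq> {p1, p2}"
    using Fr_elem[OF B] by metis
  have Z: "ZB B = (\<lambda>x. ind u v x - ind p0 u x - ind p0 v x + ind p0 p1 x + ind p0 p2 x - ind p1 p2 x)"
    using ZB_expl[OF uv(2)] uv(1) by simp
  have sym: "fB B (x, z) = fB B (z, x)" for x z
    unfolding fB_def Z by (simp add: ind_sym[of _ _ x z] mult.commute)
  have diag: "fB B (x, x) = 0" for x
    unfolding fB_def Z using uv pd by (simp add: ind_diag)
  have row: "(\<Sum>v\<in>V. y v * fB B (w, v)) = 0" if w: "w \<in> V" for w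
  proof -
    have "(\<Sum>v'\<in>V. y v' * fB B (w, v')) = (\<Sum>v'\<in>V. ZB B (w, v')) / y w"
      unfolding sum_divide_distrib using w y_nz by (intro sum.cong refl) (simp add: fB_def)
    also have "(\<Sum>v'\<in>V. ZB B (w, v')) = 0"
      unfolding Z using w uv pd pV by (simp add: sum.distrib sum_subtractf row_ind)
    finally show ?thesis by simp
  qed
  show ?thesis unfolding Sy_def using sym diag row by (auto simp: fB_def)
qed

lemma fB_Q:
  assumes uv: "u \<noteq> v" "u \<in> V" "v \<in> V" "u \<noteq> p0" "v \<noteq> p0"
  shows "Q (fB {u, v}) b = 2 * ((b u / y u - b p0 / y p0) * (b v / y v - b p0 / y p0)
                               - (b p1 / y p1 - b p0 / y p0) * (b p2 / y p2 - b p0 / y p0))"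
proof -
  have "Q (fB {u, v}) b = Q (ZB {u, v}) (\<lambda>x. b x / y x)" unfolding fB_fun by (rule Q_scaled)
  also have "\<dots> = 2 * (b u / y u) * (b v / y v) - 2 * (b p0 / y p0) * (b u / y u) - 2 * (b p0 / y p0) * (b v / y v)
     + 2 * (b p0 / y p0) * (b p1 / y p1) + 2 * (b p0 / y p0) * (b p2 / y p2) - 2 * (b p1 / y p1) * (b p2 / y p2)"
    unfolding ZB_expl[OF uv(1)] using uv pV pd by (simp add: Q_add Q_diff Q_ind)
  also have "\<dots> = 2 * ((b u / y u - b p0 / y p0) * (b v / y v - b p0 / y p0)
                               - (b p1 / y p1 - b p0 / y p0) * (b p2 / y p2 - b p0 / y p0))"
    by (rule poly_id)
  finally show ?thesis .
qed

lemma two_ab: "2 * \<bar>a * b\<bar> \<le> a\<^sup>2 + (b::real)\<^sup>2"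
proof -
  have "0 \<le> (\<bar>a\<bar> - \<bar>b\<bar>)\<^sup>2" by simp
  then show ?thesis by (simp add: power2_eq_square algebra_simps abs_mult)
qed

lemma fB_bound:
  assumes B: "B \<in> Fr"
  shows "\<exists>C. \<forall>b. supp b \<longrightarrow> (\<Sum>v\<in>V. b v) = 1 \<longrightarrow>
           \<bar>Q (fB B) (\<lambda>v. of_int (b v))\<bar> \<le> C * (- Q dV (\<lambda>v. of_int (b v)))"
proof -
  obtain u v where uv: "B = {u, v}" "u \<noteq> v" "u \<in> V" "v \<in> V" "u \<noteq> p0" "v \<noteq> p0" "{u, v} \<noteq> {p1, p2}"
    using Fr_elem[OF B] by metis
  obtain Cu where Cu: "\<forall>b::real^12 \<Rightarrow> int. (\<Sum>v\<in>V. b v) = 1 \<longrightarrow> Q dV (\<lambda>v. of_int (b v)) \<le> -1 \<longrightarrow>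
           (of_int (b u) / y u - of_int (b p0) / y p0)\<^sup>2 \<le> Cu * (- Q dV (\<lambda>v. of_int (b v)))"
    using delta_bound[OF uv(3) pV(1) uv(5)] by blast
  obtain Cv where Cv: "\<forall>b::real^12 \<Rightarrow> int. (\<Sum>v\<in>V. b v) = 1 \<longrightarrow> Q dV (\<lambda>v. of_int (b v)) \<le> -1 \<longrightarrow>
           (of_int (b v) / y v - of_int (b p0) / y p0)\<^sup>2 \<le> Cv * (- Q dV (\<lambda>v. of_int (b v)))"
    using delta_bound[OF uv(4) pV(1) uv(6)] by blast
  obtain C1 where C1: "\<forall>b::real^12 \<Rightarrow> int. (\<Sum>v\<in>V. b v) = 1 \<longrightarrow> Q dV (\<lambda>v. of_int (b v)) \<le> -1 \<longrightarrow>
           (of_int (b p1) / y p1 - of_int (b p0) / y p0)\<^sup>2 \<le> C1 * (- Q dV (\<lambda>v. of_int (b v)))"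
    using delta_bound[OF pV(2) pV(1)] pd by metis
  obtain C2 where C2: "\<forall>b::real^12 \<Rightarrow> int. (\<Sum>v\<in>V. b v) = 1 \<longrightarrow> Q dV (\<lambda>v. of_int (b v)) \<le> -1 \<longrightarrow>
           (of_int (b p2) / y p2 - of_int (b p0) / y p0)\<^sup>2 \<le> C2 * (- Q dV (\<lambda>v. of_int (b v)))"
    using delta_bound[OF pV(3) pV(1)] pd by metis
  show ?thesis
  proof (intro exI[of _ "Cu + Cv + C1 + C2"] allI impI)
    fix b :: "real^12 \<Rightarrow> int" assume sb: "supp b" and b1: "(\<Sum>v\<in>V. b v) = 1"
    define \<delta> where "\<delta> s = real_of_int (b s) / y s - real_of_int (b p0) / y p0" for s
    have QF: "Q (fB B) (\<lambda>v. of_int (b v)) = 2 * (\<delta> u * \<delta> v - \<delta> p1 * \<delta> p2)"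
      unfolding uv(1) fB_Q[OF uv(2-6)] \<delta>_def ..
    show "\<bar>Q (fB B) (\<lambda>v. of_int (b v))\<bar> \<le> (Cu + Cv + C1 + C2) * (- Q dV (\<lambda>v. of_int (b v)))"
    proof (cases "Q dV (\<lambda>v. of_int (b v)) = 0")
      case True
      obtain w k where wk: "w \<in> V" "\<forall>v\<in>V. real_of_int (b v) = (if v = w then 1 else 0) + k * y v"
        using tight_char[OF b1 True] by blast
      have dl: "\<delta> s = (if s = w then 1 / y s else 0) - (if p0 = w then 1 / y p0 else 0)" if "s \<in> V" for s
        using wk that pV y_nz[OF that] y_nz[OF pV(1)] by (simp add: \<delta>_def add_divide_distrib)
      have "\<delta> u * \<delta> v - \<delta> p1 * \<delta> p2 = 0"
        using dl[OF uv(3)] dl[OF uv(4)] dl[OF pV(2)] dl[OF pV(3)] uv pd by auto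
      then show ?thesis using QF True by simp
    next
      case False
      have q: "Q dV (\<lambda>v. of_int (b v)) \<le> -1" by (rule nontight[OF sb b1 False])
      have "\<bar>Q (fB B) (\<lambda>v. of_int (b v))\<bar> \<le> 2 * \<bar>\<delta> u * \<delta> v\<bar> + 2 * \<bar>\<delta> p1 * \<delta> p2\<bar>"
      proof -
        have "\<bar>\<delta> u * \<delta> v - \<delta> p1 * \<delta> p2\<bar> \<le> \<bar>\<delta> u * \<delta> v\<bar> + \<bar>\<delta> p1 * \<delta> p2\<bar>"
          by (rule abs_triangle_ineq4)
        moreover have a2: "\<bar>2::real\<bar> = 2" by simp
        ultimately show ?thesis unfolding QF abs_mult by (simp only: a2)
      qed
      also have "\<dots> \<le> ((\<delta> u)\<^sup>2 + (\<delta> v)\<^sup>2) + ((\<delta> p1)\<^sup>2 + (\<delta> p2)\<^sup>2)"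
        using two_ab[of "\<delta> u" "\<delta> v"] two_ab[of "\<delta> p1" "\<delta> p2"] by linarith
      also have "\<dots> \<le> (Cu + Cv + C1 + C2) * (- Q dV (\<lambda>v. of_int (b v)))"
        using Cu[rule_format, OF b1 q] Cv[rule_format, OF b1 q] C1[rule_format, OF b1 q] C2[rule_format, OF b1 q]
        unfolding \<delta>_def by (simp add: algebra_simps)
      finally show ?thesis .
    qed
  qed
qed

lemma Q_lin1: "Q (\<lambda>x. a x + t * b x) g = Q a g + t * Q b g"
  using Q_lin[of 1 a t b g] by simp

lemma perturb:
  assumes B: "B \<in> Fr"
  shows "\<exists>\<epsilon>>0. (\<lambda>x. dV x + \<epsilon> * fB B x) \<in> min_face (HYP V) dV"
proof -
  obtain C where C: "\<forall>b. supp b \<longrightarrow> (\<Sum>v\<in>V. b v) = 1 \<longrightarrow>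
           \<bar>Q (fB B) (\<lambda>v. of_int (b v))\<bar> \<le> C * (- Q dV (\<lambda>v. of_int (b v)))"
    using fB_bound[OF B] by blast
  define C' where "C' = max C 0"
  define \<epsilon> where "\<epsilon> = 1 / (C' + 1)"
  have C'0: "C' \<ge> 0" by (simp add: C'_def)
  have eps: "\<epsilon> > 0" "\<epsilon> * C' < 1" using C'0 by (auto simp: \<epsilon>_def field_simps)
  have fS: "fB B \<in> Sy" by (rule fB_Sy[OF B])
  have dH: "dV \<in> HYP V" by (rule dV_HYP)
  have inH: "(\<lambda>x. dV x + \<sigma> * fB B x) \<in> HYP V" if \<sigma>: "\<bar>\<sigma>\<bar> \<le> \<epsilon>" for \<sigma>
    unfolding HYP_iff
  proof (intro conjI allI impI)
    fix b assume sb: "supp b" and b1: "(\<Sum>v\<in>V. b v) = 1"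
    define q where "q = - Q dV (\<lambda>v. of_int (b v))"
    have q0: "q \<ge> 0" using dH sb b1 unfolding HYP_iff q_def by auto
    have "\<bar>Q (fB B) (\<lambda>v. of_int (b v))\<bar> \<le> C' * q"
      using C sb b1 q0 unfolding q_def C'_def by (meson max.cobounded1 mult_right_mono order_trans)
    then have "\<bar>\<sigma>\<bar> * \<bar>Q (fB B) (\<lambda>v. of_int (b v))\<bar> \<le> \<epsilon> * (C' * q)"
      using \<sigma> eps by (intro mult_mono) auto
    moreover have "\<sigma> * Q (fB B) (\<lambda>v. of_int (b v)) \<le> \<bar>\<sigma>\<bar> * \<bar>Q (fB B) (\<lambda>v. of_int (b v))\<bar>"
      by (metis abs_ge_self abs_mult)
    moreover have "(\<epsilon> * C') * q \<le> 1 * q" using eps q0 by (intro mult_right_mono) auto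
    ultimately have "\<sigma> * Q (fB B) (\<lambda>v. of_int (b v)) \<le> q" by (simp add: mult.assoc)
    then show "Q (\<lambda>x. dV x + \<sigma> * fB B x) (\<lambda>v. of_int (b v)) \<le> 0"
      unfolding Q_lin1 q_def by linarith
  qed (use dH fS in \<open>auto simp: HYP_iff Sy_def\<close>)
  have "(\<lambda>x. dV x + \<epsilon> * fB B x) \<in> F" if F: "fun_face_of F (HYP V)" "dV \<in> F" for F
  proof -
    have m: "(\<lambda>x. (1 - 1/2) * (dV x + (- \<epsilon>) * fB B x) + 1/2 * (dV x + \<epsilon> * fB B x)) = dV"
      by (simp add: fun_eq_iff algebra_simps)
    have h1: "(\<lambda>x. dV x + (- \<epsilon>) * fB B x) \<in> HYP V" and h2: "(\<lambda>x. dV x + \<epsilon> * fB B x) \<in> HYP V"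
      using inH[of "- \<epsilon>"] inH[of \<epsilon>] eps by auto
    have face: "\<forall>a\<in>HYP V. \<forall>b\<in>HYP V. \<forall>t::real. 0 < t \<and> t < 1 \<longrightarrow> (\<lambda>x. (1 - t) * a x + t * b x) \<in> F \<longrightarrow> a \<in> F \<and> b \<in> F"
      using F(1) unfolding fun_face_of_def by blast
    have "(\<lambda>x. (1 - 1/2) * (dV x + (- \<epsilon>) * fB B x) + 1/2 * (dV x + \<epsilon> * fB B x)) \<in> F"
      unfolding m by (rule F(2))
    from face[rule_format, OF h1 h2, of "1/2"] this show ?thesis by simp
  qed
  then show ?thesis using eps unfolding min_face_def by blast
qed

lemma ind_p0_zero: "x \<noteq> p0 \<Longrightarrow> z \<noteq> p0 \<Longrightarrow> ind p0 u (x, z) = 0"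
  by (auto simp: ind_def doubleton_eq_iff)

lemma fB_eval:
  assumes B0: "B0 \<in> Fr" "B0 = {x, z}" "x \<noteq> z"
  shows "fB B (x, z) = (if B = B0 then 1 / (y x * y z) else 0)"
proof -
  have xz: "x \<in> V" "z \<in> V" "x \<noteq> p0" "z \<noteq> p0" "{x, z} \<noteq> {p1, p2}" using B0 by (auto simp: Fr_def)
  have "ZB B (x, z) = indB B (x, z)"
    using xz by (simp add: ZB_def ind_p0_zero) (simp add: ind_def)
  also have "\<dots> = (if B = B0 then 1 else 0)" using B0 by (auto simp: indB_def)
  finally show ?thesis using xz by (simp add: fB_def)
qed

lemma sum_small:
  assumes "S \<subseteq> V" "\<And>v. v \<in> V \<Longrightarrow> v \<notin> S \<Longrightarrow> f v = 0"
  shows "sum f V = sum f S"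
  using assms finV by (intro sum.mono_neutral_right) auto

lemma Sy_zero:
  assumes G: "G \<in> Sy"
    and fr: "\<And>x z. x \<in> V \<Longrightarrow> z \<in> V \<Longrightarrow> x \<noteq> p0 \<Longrightarrow> z \<noteq> p0 \<Longrightarrow> x \<noteq> z \<Longrightarrow> {x, z} \<noteq> {p1, p2} \<Longrightarrow> G (x, z) = 0"
  shows "G = (\<lambda>_. 0)"
proof -
  have supp: "\<And>u v. (u \<notin> V \<or> v \<notin> V) \<Longrightarrow> G (u, v) = 0" and sym: "\<And>u v. G (u, v) = G (v, u)"
    and diag: "\<And>v. G (v, v) = 0" and row: "\<And>w. w \<in> V \<Longrightarrow> (\<Sum>v\<in>V. y v * G (w, v)) = 0"
    using G by (auto simp: Sy_def)
  have y0: "y p0 \<noteq> 0" and y1: "y p1 \<noteq> 0" and y2: "y p2 \<noteq> 0" using y_nz pV by auto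
  have i: "G (w, p0) = 0" if w: "w \<in> V" "w \<noteq> p0" "w \<noteq> p1" "w \<noteq> p2" for w
  proof -
    have "(\<Sum>v\<in>V. y v * G (w, v)) = (\<Sum>v\<in>{p0}. y v * G (w, v))"
    proof (rule sum_small)
      fix v assume v: "v \<in> V" "v \<notin> {p0}"
      show "y v * G (w, v) = 0"
      proof (cases "v = w")
        case False
        then have "{w, v} \<noteq> {p1, p2}" using w by (auto simp: doubleton_eq_iff)
        then show ?thesis using fr[of w v] w v False by simp
      qed (simp add: diag)
    qed (use pV in auto)
    then show ?thesis using row[OF w(1)] y0 by simp
  qed
  have r1: "y p0 * G (p1, p0) + y p2 * G (p1, p2) = 0"
  proof -
    have "(\<Sum>v\<in>V. y v * G (p1, v)) = (\<Sum>v\<in>{p0, p2}. y v * G (p1, v))"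
    proof (rule sum_small)
      fix v assume v: "v \<in> V" "v \<notin> {p0, p2}"
      show "y v * G (p1, v) = 0"
      proof (cases "v = p1")
        case False
        then have "{p1, v} \<noteq> {p1, p2}" using v pd by (auto simp: doubleton_eq_iff)
        then show ?thesis using fr[of p1 v] v pV pd False by simp
      qed (simp add: diag)
    qed (use pV in auto)
    then show ?thesis using row[OF pV(2)] pd by simp
  qed
  have r2: "y p0 * G (p2, p0) + y p1 * G (p2, p1) = 0"
  proof -
    have "(\<Sum>v\<in>V. y v * G (p2, v)) = (\<Sum>v\<in>{p0, p1}. y v * G (p2, v))"
    proof (rule sum_small)
      fix v assume v: "v \<in> V" "v \<notin> {p0, p1}"
      show "y v * G (p2, v) = 0"
      proof (cases "v = p2")
        case False
        then have "{p2, v} \<noteq> {p1, p2}" using v pd by (auto simp: doubleton_eq_iff)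
        then show ?thesis using fr[of p2 v] v pV pd False by simp
      qed (simp add: diag)
    qed (use pV in auto)
    then show ?thesis using row[OF pV(3)] pd by simp
  qed
  have r0: "y p1 * G (p0, p1) + y p2 * G (p0, p2) = 0"
  proof -
    have "(\<Sum>v\<in>V. y v * G (p0, v)) = (\<Sum>v\<in>{p1, p2}. y v * G (p0, v))"
    proof (rule sum_small)
      fix v assume v: "v \<in> V" "v \<notin> {p1, p2}"
      show "y v * G (p0, v) = 0"
      proof (cases "v = p0")
        case False
        then show ?thesis using i[of v] v sym[of p0 v] by simp
      qed (simp add: diag)
    qed (use pV in auto)
    then show ?thesis using row[OF pV(1)] pd by simp
  qed
  define X where "X = G (p0, p1)"
  define Y where "Y = G (p0, p2)"
  define Z where "Z = G (p1, p2)"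
  have e1: "y p0 * X + y p2 * Z = 0" using r1 sym[of p1 p0] by (simp add: X_def Z_def)
  have e2: "y p0 * Y + y p1 * Z = 0" using r2 sym[of p2 p0] sym[of p2 p1] by (simp add: Y_def Z_def)
  have e3: "y p1 * X + y p2 * Y = 0" using r0 by (simp add: X_def Y_def)
  have "y p0 * (y p1 * X + y p2 * Y) = y p1 * (y p0 * X + y p2 * Z) + y p2 * (y p0 * Y + y p1 * Z) - 2 * y p1 * y p2 * Z"
    by (simp add: algebra_simps)
  then have "2 * y p1 * y p2 * Z = 0" using e1 e2 e3 by simp
  then have Z0: "Z = 0" using y1 y2 by simp
  then have X0: "X = 0" and Y0: "Y = 0" using e1 e2 y0 by auto
  have allz: "G (x, z) = 0" for x z
  proof (cases "x \<in> V \<and> z \<in> V \<and> x \<noteq> z")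
    case False
    then show ?thesis using supp[of x z] diag[of x] by blast
  next
    case True
    then have xz: "x \<in> V" "z \<in> V" "x \<noteq> z" by auto
    have c0: "G (p0, w) = 0" if "w \<in> V" "w \<noteq> p0" for w
    proof -
      consider "w = p1" | "w = p2" | "w \<noteq> p1" "w \<noteq> p2" by blast
      then show ?thesis
      proof cases
        case 1 then show ?thesis using X0 by (simp add: X_def)
      next
        case 2 then show ?thesis using Y0 by (simp add: Y_def)
      next
        case 3 then have "G (w, p0) = 0" using i[of w] that by blast
        then show ?thesis using sym[of w p0] by simp
      qed
    qed
    consider "x = p0" | "z = p0" | "x \<noteq> p0" "z \<noteq> p0" "{x, z} = {p1, p2}" | "x \<noteq> p0" "z \<noteq> p0" "{x, z} \<noteq> {p1, p2}"
      by blast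
    then show ?thesis
    proof cases
      case 1 then show ?thesis using c0[of z] xz by simp
    next
      case 2 then have "G (z, x) = 0" using c0[of x] xz by simp
      then show ?thesis using sym[of x z] by simp
    next
      case 3
      then have "(x = p1 \<and> z = p2) \<or> (x = p2 \<and> z = p1)" by (simp add: doubleton_eq_iff)
      then show ?thesis
      proof
        assume "x = p1 \<and> z = p2" then show ?thesis using Z0 by (simp add: Z_def)
      next
        assume "x = p2 \<and> z = p1" then show ?thesis using Z0 sym[of p2 p1] by (simp add: Z_def)
      qed
    next
      case 4 then show ?thesis using fr[of x z] xz by blast
    qed
  qed
  show ?thesis by (auto simp: fun_eq_iff allz)
qed
definition cf :: "((real^12) \<times> (real^12) \<Rightarrow> real) \<Rightarrow> (real^12) set \<Rightarrow> real" where
  "cf g B = (\<Sum>x\<in>B. \<Sum>z\<in>B. g (x, z) * y x * y z) / 2"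

lemma cf_eval: assumes "g \<in> Sy" "u \<noteq> v" shows "cf g {u, v} = g (u, v) * y u * y v"
proof -
  have "g (u, u) = 0" "g (v, v) = 0" "g (v, u) = g (u, v)" using assms(1) by (auto simp: Sy_def)
  then show ?thesis using assms(2) by (simp add: cf_def algebra_simps)
qed

lemma Sy_span:
  assumes g: "g \<in> Sy"
  shows "g = (\<Sum>B\<in>Fr. (\<lambda>x. cf g B * fB B x))"
proof -
  define H where "H = (\<Sum>B\<in>Fr. (\<lambda>x. cf g B * fB B x))"
  have Hx: "H p = (\<Sum>B\<in>Fr. cf g B * fB B p)" for p unfolding H_def by (rule sum_fun_apply)
  define G where "G = (\<lambda>p. g p - H p)"
  have fS: "\<And>B. B \<in> Fr \<Longrightarrow> fB B \<in> Sy" by (rule fB_Sy)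
  have G: "G \<in> Sy"
  proof -
    have "(\<forall>u v. (u \<notin> V \<or> v \<notin> V) \<longrightarrow> G (u, v) = 0)" using g fS by (auto simp: Sy_def G_def Hx fB_def)
    moreover have "\<forall>u v. G (u, v) = G (v, u)"
    proof (intro allI)
      fix u v
      have "fB B (u, v) = fB B (v, u)" if "B \<in> Fr" for B using fS[OF that] by (simp add: Sy_def)
      then have "H (u, v) = H (v, u)" unfolding Hx by (intro sum.cong) auto
      then show "G (u, v) = G (v, u)" using g by (simp add: G_def Sy_def)
    qed
    moreover have "\<forall>v. G (v, v) = 0" using g fS by (auto simp: Sy_def G_def Hx)
    moreover have "\<forall>w\<in>V. (\<Sum>v\<in>V. y v * G (w, v)) = 0"
    proof
      fix w assume w: "w \<in> V"
      have "(\<Sum>v\<in>V. y v * H (w, v)) = (\<Sum>B\<in>Fr. cf g B * (\<Sum>v\<in>V. y v * fB B (w, v)))"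
        unfolding Hx by (simp add: sum_distrib_left mult_ac sum.swap[of _ Fr])
      also have "\<dots> = 0"
      proof (intro sum.neutral ballI)
        fix B assume "B \<in> Fr"
        then have "(\<Sum>v\<in>V. y v * fB B (w, v)) = 0" using fS w unfolding Sy_def by blast
        then show "cf g B * (\<Sum>v\<in>V. y v * fB B (w, v)) = 0" by simp
      qed
      moreover have "(\<Sum>v\<in>V. y v * g (w, v)) = 0" using g w unfolding Sy_def by blast
      ultimately show "(\<Sum>v\<in>V. y v * G (w, v)) = 0" by (simp add: G_def right_diff_distrib sum_subtractf)
    qed
    ultimately show ?thesis by (simp add: Sy_def)
  qed
  have fr: "G (x, z) = 0" if xz: "x \<in> V" "z \<in> V" "x \<noteq> p0" "z \<noteq> p0" "x \<noteq> z" "{x, z} \<noteq> {p1, p2}" for x z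
  proof -
    have B0: "{x, z} \<in> Fr" using xz by (auto simp: Fr_def)
    have "H (x, z) = (\<Sum>B\<in>Fr. if B = {x, z} then cf g B * (1 / (y x * y z)) else 0)"
      unfolding Hx by (intro sum.cong refl) (simp add: fB_eval[OF B0 refl xz(5)])
    also have "\<dots> = cf g {x, z} / (y x * y z)" using B0 Fr_finite by (simp add: sum.delta')
    also have "\<dots> = g (x, z)" using cf_eval[OF g xz(5)] y_nz xz by simp
    finally show ?thesis by (simp add: G_def)
  qed
  have "G = (\<lambda>_. 0)" by (rule Sy_zero[OF G fr])
  then show ?thesis by (simp add: fun_eq_iff G_def H_def[symmetric])
qed

lemma Sy_in_span: "Sy \<subseteq> fv.span (fB ` Fr)"
proof
  fix g assume g: "g \<in> Sy"
  have "(\<Sum>B\<in>Fr. (\<lambda>x. cf g B * fB B x)) \<in> fv.span (fB ` Fr)"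
  proof (rule fv.span_sum)
    fix B assume "B \<in> Fr"
    then have "fB B \<in> fv.span (fB ` Fr)" by (intro fv.span_base) simp
    then show "(\<lambda>x. cf g B * fB B x) \<in> fv.span (fB ` Fr)" by (rule fv.span_scale)
  qed
  then show "g \<in> fv.span (fB ` Fr)" using Sy_span[OF g] by simp
qed

lemma upper_card:
  assumes "D \<subseteq> Sy" "fun_lin_indep D"
  shows "card D \<le> 77"
proof -
  have "finite D \<and> card D \<le> card (fB ` Fr)"
    using fv.independent_span_bound[OF finite_imageI[OF Fr_finite] fun_lin_indep_fv[OF assms(2)]] assms(1) Sy_in_span
    by blast
  moreover have "card (fB ` Fr) \<le> 77" using card_image_le[OF Fr_finite, of fB] Fr_card by simp
  ultimately show ?thesis by linarith
qed

lemma lower_set: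
  "\<exists>D. (\<exists>f0\<in>min_face (HYP V) dV. D \<subseteq> (\<lambda>f x. f x - f0 x) ` min_face (HYP V) dV \<and> fun_lin_indep D) \<and> card D = 77"
proof -
  have "\<forall>B\<in>Fr. \<exists>\<epsilon>>0. (\<lambda>x. dV x + \<epsilon> * fB B x) \<in> min_face (HYP V) dV" using perturb by blast
  from bchoice[OF this] obtain e where e0: "\<forall>B\<in>Fr. e B > 0 \<and> (\<lambda>x. dV x + e B * fB B x) \<in> min_face (HYP V) dV"
    by blast
  then have e: "\<And>B. B \<in> Fr \<Longrightarrow> e B > 0 \<and> (\<lambda>x. dV x + e B * fB B x) \<in> min_face (HYP V) dV"
    by blast
  define h where "h B = (\<lambda>x. e B * fB B x)" for B
  have d0: "dV \<in> min_face (HYP V) dV" unfolding min_face_def by blast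
  have sub: "h ` Fr \<subseteq> (\<lambda>f x. f x - f0 x) ` min_face (HYP V) dV" if "f0 = dV" for f0
  proof
    fix g assume "g \<in> h ` Fr"
    then obtain B where B: "B \<in> Fr" "g = h B" by auto
    have geq: "g = (\<lambda>x. (\<lambda>x. dV x + e B * fB B x) x - dV x)" by (simp add: B h_def)
    show "g \<in> (\<lambda>f x. f x - f0 x) ` min_face (HYP V) dV"
    proof (rule image_eqI[where x="\<lambda>x. dV x + e B * fB B x"])
      show "g = (\<lambda>f x. f x - f0 x) (\<lambda>x. dV x + e B * fB B x)" using geq that by simp
      show "(\<lambda>x. dV x + e B * fB B x) \<in> min_face (HYP V) dV" using e[OF B(1)] by blast
    qed
  qed
  have ev: "h B (x, z) = (if B = B0 then e B / (y x * y z) else 0)" if "B0 \<in> Fr" "B0 = {x, z}" "x \<noteq> z" for B B0 x z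
    using fB_eval[OF that] by (simp add: h_def)
  have pairs: "\<exists>x z. B0 = {x, z} \<and> x \<noteq> z \<and> x \<in> V \<and> z \<in> V" if "B0 \<in> Fr" for B0
    using Fr_elem[OF that] by metis
  have inj: "inj_on h Fr"
  proof
    fix B1 B2 assume B1: "B1 \<in> Fr" and B2: "B2 \<in> Fr" and eq: "h B1 = h B2"
    obtain x z where xz: "B1 = {x, z}" "x \<noteq> z" "x \<in> V" "z \<in> V" using pairs[OF B1] by blast
    have "h B1 (x, z) = e B1 / (y x * y z)" using ev[OF B1 xz(1,2)] by simp
    moreover have "h B2 (x, z) = (if B2 = B1 then e B2 / (y x * y z) else 0)" using ev[OF B1 xz(1,2)] by simp
    moreover have "e B1 / (y x * y z) \<noteq> 0" using e[OF B1] y_nz xz by simp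
    ultimately show "B1 = B2"
    proof -
      assume h1: "h B1 (x, z) = e B1 / (y x * y z)" and h2: "h B2 (x, z) = (if B2 = B1 then e B2 / (y x * y z) else 0)"
        and nz: "e B1 / (y x * y z) \<noteq> 0"
      show "B1 = B2"
      proof (rule ccontr)
        assume "B1 \<noteq> B2"
        then have "h B2 (x, z) = 0" using h2 by simp
        then show False using h1 nz eq by simp
      qed
    qed
  qed
  have indep: "fun_lin_indep (h ` Fr)"
    unfolding fun_lin_indep_def
  proof (intro conjI allI impI ballI)
    show "finite (h ` Fr)" using Fr_finite by simp
    fix c g assume c: "\<forall>x. (\<Sum>g\<in>h ` Fr. c g * g x) = 0" and g: "g \<in> h ` Fr"
    then obtain B0 where B0: "B0 \<in> Fr" "g = h B0" by auto
    obtain x z where xz: "B0 = {x, z}" "x \<noteq> z" "x \<in> V" "z \<in> V" using pairs[OF B0(1)] by blast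
    have "0 = (\<Sum>g\<in>h ` Fr. c g * g (x, z))" using c by simp
    also have "\<dots> = (\<Sum>B\<in>Fr. c (h B) * h B (x, z))" by (simp add: sum.reindex[OF inj])
    also have "\<dots> = (\<Sum>B\<in>Fr. if B = B0 then c (h B) * (e B / (y x * y z)) else 0)"
      by (intro sum.cong refl) (simp add: ev[OF B0(1) xz(1,2)])
    also have "\<dots> = c (h B0) * (e B0 / (y x * y z))" using B0 Fr_finite by (simp add: sum.delta')
    finally have "c (h B0) * (e B0 / (y x * y z)) = 0" by simp
    moreover have "e B0 / (y x * y z) \<noteq> 0" using e[OF B0(1)] y_nz xz by simp
    ultimately show "c g = 0" using B0 by simp
  qed
  have cd: "card (h ` Fr) = 77" using card_image[OF inj] Fr_card by simp
  show ?thesis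
  proof (intro exI[of _ "h ` Fr"] conjI)
    show "\<exists>f0\<in>min_face (HYP V) dV. h ` Fr \<subseteq> (\<lambda>f x. f x - f0 x) ` min_face (HYP V) dV \<and> fun_lin_indep (h ` Fr)"
    proof (rule bexI[of _ dV])
      show "h ` Fr \<subseteq> (\<lambda>f x. f x - dV x) ` min_face (HYP V) dV \<and> fun_lin_indep (h ` Fr)"
        using sub[OF refl] indep by simp
    qed (rule d0)
  qed (rule cd)
qed

lemma rank77: "fun_dim (min_face (HYP V) dV) = 77"
proof -
  let ?M = "min_face (HYP V) dV"
  let ?S = "{card D | D. \<exists>f0\<in>?M. D \<subseteq> (\<lambda>f x. f x - f0 x) ` ?M \<and> fun_lin_indep D}"
  have le: "n \<le> 77" if "n \<in> ?S" for n
  proof -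
    obtain D f0 where D: "n = card D" "f0 \<in> ?M" "D \<subseteq> (\<lambda>f x. f x - f0 x) ` ?M" "fun_lin_indep D"
      using \<open>n \<in> ?S\<close> by blast
    have "D \<subseteq> Sy"
    proof
      fix g assume "g \<in> D"
      then obtain f where f: "f \<in> ?M" "g = (\<lambda>x. f x - f0 x)" using D(3) by auto
      show "g \<in> Sy" unfolding f(2) using FT_diff_Sy f(1) D(2) min_face_FT by blast
    qed
    then show ?thesis using upper_card D by simp
  qed
  have fin: "finite ?S" by (rule finite_subset[of _ "{..77}"]) (use le in auto)
  obtain D where D: "\<exists>f0\<in>?M. D \<subseteq> (\<lambda>f x. f x - f0 x) ` ?M \<and> fun_lin_indep D" "card D = 77"
    using lower_set by blast
  have mem: "77 \<in> ?S"
  proof (rule CollectI, rule exI[of _ D])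
    show "77 = card D \<and> (\<exists>f0\<in>?M. D \<subseteq> (\<lambda>f x. f x - f0 x) ` ?M \<and> fun_lin_indep D)" using D by simp
  qed
  show ?thesis unfolding fun_dim_def by (rule Max_eqI[OF fin le mem])
qed

end



lemma lattice_closed:
  assumes lat: "is_lattice L" and fin: "finite S" and SL: "S \<subseteq> L"
  shows "(\<Sum>v\<in>S. of_int (b v) *\<^sub>R v) \<in> L"
proof -
  obtain B where B: "L = {(\<Sum>x\<in>B. of_int (z x) *\<^sub>R x) | z. True}"
    using lat unfolding is_lattice_def by blast
  have zero: "0 \<in> L" unfolding B by (auto intro!: exI[of _ "\<lambda>_. 0"])
  have add: "p + q \<in> L" if hp: "p \<in> L" "q \<in> L" for p q
  proof -
    obtain z1 z2 where "p = (\<Sum>x\<in>B. of_int (z1 x) *\<^sub>R x)" "q = (\<Sum>x\<in>B. of_int (z2 x) *\<^sub>R x)"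
      using hp unfolding B by blast
    then have "p + q = (\<Sum>x\<in>B. of_int (z1 x + z2 x) *\<^sub>R x)" by (simp add: sum.distrib scaleR_add_left)
    then show ?thesis unfolding B by (intro CollectI exI[of _ "\<lambda>x. z1 x + z2 x"]) simp
  qed
  have smul: "of_int k *\<^sub>R p \<in> L" if hp: "p \<in> L" for p k
  proof -
    obtain z1 where "p = (\<Sum>x\<in>B. of_int (z1 x) *\<^sub>R x)" using hp unfolding B by blast
    then have "of_int k *\<^sub>R p = (\<Sum>x\<in>B. of_int (k * z1 x) *\<^sub>R x)" by (simp add: scaleR_sum_right)
    then show ?thesis unfolding B by (intro CollectI exI[of _ "\<lambda>x. k * z1 x"]) simp
  qed
  show ?thesis using fin SL
  proof (induction S rule: finite_induct)
    case empty then show ?case using zero by simp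
  next
    case (insert a F) then show ?case using add smul by simp
  qed
qed

lemma vertices_sphere:
  fixes S :: "'a::euclidean_space set"
  assumes "S \<subseteq> sphere c r"
  shows "vertices (convex hull S) = S"
proof
  show "vertices (convex hull S) \<subseteq> S" unfolding vertices_def using extreme_point_of_convex_hull by blast
next
  show "S \<subseteq> vertices (convex hull S)"
  proof
    fix x assume x: "x \<in> S"
    have sub: "convex hull S \<subseteq> cball c r"
      using assms sphere_cball by (intro hull_minimal) (auto simp: convex_cball)
    have "x extreme_point_of (convex hull S)"
      unfolding extreme_point_of_def
    proof (intro conjI ballI)
      show "x \<in> convex hull S" using x by (rule hull_inc)
      fix a b assume a: "a \<in> convex hull S" and b: "b \<in> convex hull S"
      show "x \<notin> open_segment a b"
      proof
        assume "x \<in> open_segment a b"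
        then have "dist c x < dist c a \<or> dist c x < dist c b" by (rule dist_decreases_open_segment)
        moreover have "dist c a \<le> r" "dist c b \<le> r" using a b sub by auto
        moreover have "dist c x = r" using x assms by auto
        ultimately show False by linarith
      qed
    qed
    then show "x \<in> vertices (convex hull S)" by (simp add: vertices_def)
  qed
qed

theorem mainTheorem3:
  fixes L P :: "(real^12) set"
    and A1 A2 B1 B2 :: "(real^12) set"
  assumes lat: "is_lattice L"
    and del: "delaunay_polytope L P"
    and V14: "card (vertices P) = 14"
    and Vpart: "vertices P = A1 \<union> A2 \<union> B1 \<union> B2"
    and disj: "A1 \<inter> A2 = {}" "A1 \<inter> B1 = {}" "A1 \<inter> B2 = {}"
              "A2 \<inter> B1 = {}" "A2 \<inter> B2 = {}" "B1 \<inter> B2 = {}"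
    and cards: "card A1 = 3" "card A2 = 3" "card B1 = 4" "card B2 = 4"
    and d_same: "\<And>S u v. S \<in> {A1, A2, B1, B2} \<Longrightarrow> u \<in> S \<Longrightarrow> v \<in> S \<Longrightarrow> u \<noteq> v
                   \<Longrightarrow> (norm (u - v))\<^sup>2 = 7"
    and d_6a: "\<And>u v. u \<in> A1 \<Longrightarrow> v \<in> B1 \<Longrightarrow> (norm (u - v))\<^sup>2 = 6"
    and d_6b: "\<And>u v. u \<in> A2 \<Longrightarrow> v \<in> B2 \<Longrightarrow> (norm (u - v))\<^sup>2 = 6"
    and d_10: "\<And>u v. u \<in> A1 \<Longrightarrow> v \<in> A2 \<Longrightarrow> (norm (u - v))\<^sup>2 = 10"
    and d_12a: "\<And>u v. u \<in> B1 \<Longrightarrow> v \<in> B2 \<Longrightarrow> (norm (u - v))\<^sup>2 = 12"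
    and d_12b: "\<And>u v. u \<in> A1 \<Longrightarrow> v \<in> B2 \<Longrightarrow> (norm (u - v))\<^sup>2 = 12"
    and d_12c: "\<And>u v. u \<in> A2 \<Longrightarrow> v \<in> B1 \<Longrightarrow> (norm (u - v))\<^sup>2 = 12"
  shows "(\<forall>u\<in>vertices P. K_affine_basis UNIV (vertices P) (vertices P - {u}))
       \<and> int_affine_deps (vertices P) =
           {(\<lambda>v. k * (if v \<in> A1 then 3 else if v \<in> A2 then -3
                        else if v \<in> B2 then 2 else if v \<in> B1 then -2 else 0)) | k. True}
       \<and> \<not> K_basic \<int> (vertices P)
       \<and> delaunay_rank (vertices P) = 77"
proof -
  obtain c r W where emp: "\<forall>a\<in>L. r\<^sup>2 \<le> (norm (a - c))\<^sup>2"
    and W: "W \<subseteq> L \<inter> sphere c r" "\<not> affine_dependent W" "card W = DIM(real^12) + 1"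
    and Pdef: "P = convex hull (L \<inter> sphere c r)"
    using del unfolding delaunay_polytope_def by blast
  have Vdef: "vertices P = L \<inter> sphere c r" unfolding Pdef by (rule vertices_sphere) auto
  have finV: "finite (vertices P)" using V14 by (intro card_ge_0_finite) simp
  interpret conf L "vertices P" A1 A2 B1 B2 W c r
  proof
    show "\<And>b::real^12 \<Rightarrow> int. (\<Sum>v\<in>vertices P. of_int (b v) *\<^sub>R v) \<in> L"
      using lattice_closed[OF lat finV] Vdef by blast
  qed (use Vdef emp W V14 Vpart disj cards d_same d_6a d_6b d_10 d_12a d_12b d_12c in auto)
  obtain p0 p1 p2 where p: "A1 = {p0, p1, p2}" "p0 \<noteq> p1" "p1 \<noteq> p2" "p0 \<noteq> p2"
    using cards(1) card_3_iff by metis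
  interpret conf3 L "vertices P" A1 A2 B1 B2 W c r p0 p1 p2
    using p Vpart by unfold_locales auto
  have yeq: "yi = (\<lambda>v. if v \<in> A1 then 3 else if v \<in> A2 then -3
                        else if v \<in> B2 then 2 else if v \<in> B1 then -2 else 0)"
    by (simp add: fun_eq_iff yi_def)
  have "delaunay_rank (vertices P) = 77" using rank77 by (simp add: delaunay_rank_def dV_def)
  then show ?thesis using part1 part2 part3 unfolding yeq by simp
qed

end
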